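(* Let $a,b>0$ with $\tfrac12\le ab\le 1$ and $\delta=\tfrac1b-a$. Define $\beta_0=\chi_{[0,1/b)}$, $\gamma_0=\tfrac1{\sqrt2}\big(\chi_{[0,\delta)}+\chi_{[a,1/b)}\big)+\chi_{[\delta,a)}$, $\psi_0=\tfrac{1}{\sqrt{2\sqrt2}}\big(\chi_{[0,\delta)}+\chi_{[a,1/b)}\big)+\chi_{[\delta,a)}$, and $\beta_k=T_{ka}\beta_0$, $\gamma_k=T_{ka}\gamma_0$, $\psi_k=T_{ka}\psi_0$. Let $S^b f=\sum_k\langle f,\beta_k\rangle_{1/b}\beta_k$ and $S^\psi f=\sum_k\langle f,\psi_k\rangle_{1/b}\psi_k$ (these are the frame operators of the systems $(\sqrt b\beta_0,a,b)$ and $(\sqrt b\psi_0,a,b)$). Then: $(\sqrt b\beta_0,a,b)$ is a Weyl–Heisenberg frame with lower frame bound $1$ and upper frame bound $2$; $(\sqrt b\gamma_0,a,b)$ is a normalized tight Weyl–Heisenberg frame, i.e. $f=\sum_k\langle f,\gamma_k\rangle_{1/b}\gamma_k$ for all $f\in L^2(\mathbb R)$; $S^\psi(\beta_k)=\gamma_k$ for all $k\in\mathbb Z$; $S^\psi S^b S^\psi=I$; and $S^\psi=(S^b)^{-1/2}$.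
   Context: $T_{a}g(t)=g(t-a)$, $E_{b}g(t)=e^{2\pi i bt}g(t)$; $(g,a,b)$ is a Weyl–Heisenberg frame if $(E_{mb}T_{na}g)_{m,n\in\mathbb Z}$ is a frame for $L^2(\mathbb R)$, normalized tight if both frame bounds equal $1$. $\langle f,h\rangle_{1/b}(t)=\sum_{k\in\mathbb Z}f(t-k/b)\overline{h(t-k/b)}$. *)

theory Defs
  imports "HOL-Analysis.Analysis"
begin

text \<open>Elements of L2(R) are represented by square-integrable Borel functions real => complex;
  equality in L2 is equality almost everywhere w.r.t. Lebesgue measure.\<close>

definition L2 :: "(real \<Rightarrow> complex) set" where
  "L2 = {f. f \<in> borel_measurable lborel \<and> integrable lborel (\<lambda>x. (cmod (f x))\<^sup>2)}"

definition l2_inner :: "(real \<Rightarrow> complex) \<Rightarrow> (real \<Rightarrow> complex) \<Rightarrow> complex" where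
  "l2_inner f h = (LINT x|lborel. f x * cnj (h x))"

definition l2_normsq :: "(real \<Rightarrow> complex) \<Rightarrow> real" where
  "l2_normsq f = (LINT x|lborel. (cmod (f x))\<^sup>2)"

definition transl :: "real \<Rightarrow> (real \<Rightarrow> complex) \<Rightarrow> real \<Rightarrow> complex" where
  "transl a g = (\<lambda>t. g (t - a))"

definition modul :: "real \<Rightarrow> (real \<Rightarrow> complex) \<Rightarrow> real \<Rightarrow> complex" where
  "modul b g = (\<lambda>t. exp (2 * pi * \<i> * complex_of_real (b * t)) * g t)"

definition WH_frame_bounds :: "(real \<Rightarrow> complex) \<Rightarrow> real \<Rightarrow> real \<Rightarrow> real \<Rightarrow> real \<Rightarrow> bool" where
  "WH_frame_bounds g a b A B \<longleftrightarrow> g \<in> L2 \<and> 0 < A \<and> A \<le> B \<and>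
     (\<forall>f\<in>L2.
        (\<lambda>(m::int, n::int). (cmod (l2_inner f (modul (of_int m * b) (transl (of_int n * a) g))))\<^sup>2)
           summable_on UNIV \<and>
        A * l2_normsq f \<le> (\<Sum>\<^sub>\<infinity>(m::int, n::int) \<in> UNIV.
             (cmod (l2_inner f (modul (of_int m * b) (transl (of_int n * a) g))))\<^sup>2) \<and>
        (\<Sum>\<^sub>\<infinity>(m::int, n::int) \<in> UNIV.
             (cmod (l2_inner f (modul (of_int m * b) (transl (of_int n * a) g))))\<^sup>2) \<le> B * l2_normsq f)"

definition WH_frame :: "(real \<Rightarrow> complex) \<Rightarrow> real \<Rightarrow> real \<Rightarrow> bool" where
  "WH_frame g a b \<longleftrightarrow> (\<exists>A B. WH_frame_bounds g a b A B)"

definition normalized_tight_WH_frame :: "(real \<Rightarrow> complex) \<Rightarrow> real \<Rightarrow> real \<Rightarrow> bool" where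
  "normalized_tight_WH_frame g a b \<longleftrightarrow> WH_frame_bounds g a b 1 1"

definition per_inner :: "real \<Rightarrow> (real \<Rightarrow> complex) \<Rightarrow> (real \<Rightarrow> complex) \<Rightarrow> real \<Rightarrow> complex" where
  "per_inner b f h t = (\<Sum>\<^sub>\<infinity>k::int. f (t - of_int k / b) * cnj (h (t - of_int k / b)))"

definition bracket_op :: "real \<Rightarrow> real \<Rightarrow> (real \<Rightarrow> complex) \<Rightarrow> (real \<Rightarrow> complex) \<Rightarrow> real \<Rightarrow> complex" where
  "bracket_op a b phi0 f t =
     (\<Sum>\<^sub>\<infinity>k::int. per_inner b f (transl (of_int k * a) phi0) t * transl (of_int k * a) phi0 t)"

definition ind :: "real set \<Rightarrow> real \<Rightarrow> complex" where
  "ind S t = complex_of_real (indicator S t)"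

definition beta0 :: "real \<Rightarrow> real \<Rightarrow> real \<Rightarrow> complex" where
  "beta0 a b = ind {0..<1/b}"

definition gamma0 :: "real \<Rightarrow> real \<Rightarrow> real \<Rightarrow> complex" where
  "gamma0 a b = (let \<delta> = 1/b - a in
     (\<lambda>t. complex_of_real (1 / sqrt 2) * (ind {0..<\<delta>} t + ind {a..<1/b} t) + ind {\<delta>..<a} t))"

definition psi0 :: "real \<Rightarrow> real \<Rightarrow> real \<Rightarrow> complex" where
  "psi0 a b = (let \<delta> = 1/b - a in
     (\<lambda>t. complex_of_real (1 / sqrt (2 * sqrt 2)) * (ind {0..<\<delta>} t + ind {a..<1/b} t) + ind {\<delta>..<a} t))"

text \<open>R is (as an operator on L2) the inverse square root of S: R is a bounded positive
  operator on L2 with R^2 = S^{-1}, i.e. R(R(S f)) = f and S(R(R f)) = f (in L2) for all f.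
  (By uniqueness of positive square roots this determines R = S^{-1/2}.)\<close>
definition is_inv_sqrt :: "((real \<Rightarrow> complex) \<Rightarrow> real \<Rightarrow> complex) \<Rightarrow> ((real \<Rightarrow> complex) \<Rightarrow> real \<Rightarrow> complex) \<Rightarrow> bool" where
  "is_inv_sqrt S R \<longleftrightarrow>
     (\<forall>f\<in>L2. S f \<in> L2 \<and> R f \<in> L2) \<and>
     (\<exists>C. \<forall>f\<in>L2. l2_normsq (R f) \<le> C * l2_normsq f) \<and>
     (\<forall>f\<in>L2. Im (l2_inner (R f) f) = 0 \<and> 0 \<le> Re (l2_inner (R f) f)) \<and>
     (\<forall>f\<in>L2. (AE x in lborel. R (R (S f)) x = f x) \<and> (AE x in lborel. S (R (R f)) x = f x))"

end

theory Submission
  imports Defs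
begin

lemma borel_measurable_cnj': "f \<in> borel_measurable M \<Longrightarrow> (\<lambda>x. cnj (f x :: complex)) \<in> borel_measurable M"
  by (rule borel_measurable_continuous_on[where f=cnj]) (auto intro: continuous_intros)

lemma L2_I:
  assumes "f \<in> borel_measurable lborel" "integrable lborel (\<lambda>x. (cmod (f x))\<^sup>2)"
  shows "f \<in> L2" using assms by (simp add: L2_def)

lemma L2_meas: "f \<in> L2 \<Longrightarrow> f \<in> borel_measurable lborel" by (simp add: L2_def)
lemma L2_int: "f \<in> L2 \<Longrightarrow> integrable lborel (\<lambda>x. (cmod (f x))\<^sup>2)" by (simp add: L2_def)

lemma L2_mult_bounded:
  assumes f: "f \<in> L2" and g: "g \<in> borel_measurable lborel" and B: "\<And>x. cmod (g x) \<le> B"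
  shows "(\<lambda>x. g x * f x) \<in> L2"
proof (rule L2_I)
  show "(\<lambda>x. g x * f x) \<in> borel_measurable lborel" using L2_meas[OF f] g by (intro borel_measurable_times) auto
  have "integrable lborel (\<lambda>x. B\<^sup>2 * (cmod (f x))\<^sup>2)" using L2_int[OF f] by simp
  then show "integrable lborel (\<lambda>x. (cmod (g x * f x))\<^sup>2)"
  proof (rule Bochner_Integration.integrable_bound)
    show "(\<lambda>x. (cmod (g x * f x))\<^sup>2) \<in> borel_measurable lborel" using L2_meas[OF f] g by (intro borel_measurable_power borel_measurable_norm borel_measurable_times) auto
    show "AE x in lborel. norm ((cmod (g x * f x))\<^sup>2) \<le> norm (B\<^sup>2 * (cmod (f x))\<^sup>2)"
    proof
      fix x
      have "cmod (g x) * cmod (f x) \<le> B * cmod (f x)" using B[of x] by (simp add: mult_right_mono)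
      moreover have "0 \<le> cmod (g x) * cmod (f x)" by simp
      ultimately have "(cmod (g x) * cmod (f x))\<^sup>2 \<le> (B * cmod (f x))\<^sup>2"
        using power_mono by blast
      then show "norm ((cmod (g x * f x))\<^sup>2) \<le> norm (B\<^sup>2 * (cmod (f x))\<^sup>2)"
        by (simp add: norm_mult power_mult_distrib)
    qed
  qed
qed

lemma L2_scale: "f \<in> L2 \<Longrightarrow> (\<lambda>x. c * f x) \<in> L2"
  using L2_mult_bounded[of f "\<lambda>_. c" "cmod c"] by simp

lemma sq_add_le: "(cmod (x + y))\<^sup>2 \<le> 2 * (cmod x)\<^sup>2 + 2 * (cmod y)\<^sup>2"
proof -
  have "cmod (x + y) \<le> cmod x + cmod y" by (rule norm_triangle_ineq)
  then have "(cmod (x + y))\<^sup>2 \<le> (cmod x + cmod y)\<^sup>2" by (simp add: power_mono)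
  also have "\<dots> \<le> 2 * (cmod x)\<^sup>2 + 2 * (cmod y)\<^sup>2"
  proof -
    have "0 \<le> (cmod x - cmod y)\<^sup>2" by simp
    then show ?thesis by (simp add: power2_eq_square algebra_simps)
  qed
  finally show ?thesis .
qed

lemma L2_add:
  assumes f: "f \<in> L2" and g: "g \<in> L2" shows "(\<lambda>x. f x + g x) \<in> L2"
proof (rule L2_I)
  show "(\<lambda>x. f x + g x) \<in> borel_measurable lborel" using L2_meas[OF f] L2_meas[OF g] by (intro borel_measurable_add) auto
  have "integrable lborel (\<lambda>x. 2 * (cmod (f x))\<^sup>2 + 2 * (cmod (g x))\<^sup>2)"
    using L2_int[OF f] L2_int[OF g] by simp
  then show "integrable lborel (\<lambda>x. (cmod (f x + g x))\<^sup>2)"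
  proof (rule Bochner_Integration.integrable_bound)
    show "(\<lambda>x. (cmod (f x + g x))\<^sup>2) \<in> borel_measurable lborel" using L2_meas[OF f] L2_meas[OF g] by (intro borel_measurable_power borel_measurable_norm borel_measurable_add) auto
    show "AE x in lborel. norm ((cmod (f x + g x))\<^sup>2) \<le> norm (2 * (cmod (f x))\<^sup>2 + 2 * (cmod (g x))\<^sup>2)"
      using sq_add_le by auto
  qed
qed

lemma L2_minus: "f \<in> L2 \<Longrightarrow> (\<lambda>x. - f x) \<in> L2"
  using L2_scale[of f "-1"] by simp

lemma L2_diff: "f \<in> L2 \<Longrightarrow> g \<in> L2 \<Longrightarrow> (\<lambda>x. f x - g x) \<in> L2"
  using L2_add[of f "\<lambda>x. - g x"] L2_minus[of g] by simp

lemma L2_zero: "(\<lambda>x. 0) \<in> L2" by (simp add: L2_def)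

lemma L2_sum: "finite F \<Longrightarrow> (\<And>i. i \<in> F \<Longrightarrow> f i \<in> L2) \<Longrightarrow> (\<lambda>x. \<Sum>i\<in>F. f i x) \<in> L2"
  by (induction F rule: finite_induct) (auto intro: L2_add L2_zero)

lemma L2_inner_integrable:
  assumes f: "f \<in> L2" and g: "g \<in> L2"
  shows "integrable lborel (\<lambda>x. f x * cnj (g x))"
proof -
  have "integrable lborel (\<lambda>x. (cmod (f x))\<^sup>2 + (cmod (g x))\<^sup>2)"
    using L2_int[OF f] L2_int[OF g] by simp
  then show ?thesis
  proof (rule Bochner_Integration.integrable_bound)
    show "(\<lambda>x. f x * cnj (g x)) \<in> borel_measurable lborel" using L2_meas[OF f] L2_meas[OF g] by (intro borel_measurable_times borel_measurable_cnj') auto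
    show "AE x in lborel. norm (f x * cnj (g x)) \<le> norm ((cmod (f x))\<^sup>2 + (cmod (g x))\<^sup>2)"
    proof
      fix x
      have "0 \<le> (cmod (f x) - cmod (g x))\<^sup>2" by simp
      then have "2 * (cmod (f x) * cmod (g x)) \<le> (cmod (f x))\<^sup>2 + (cmod (g x))\<^sup>2"
        by (simp add: power2_eq_square algebra_simps)
      moreover have "0 \<le> cmod (f x) * cmod (g x)" by simp
      ultimately have "cmod (f x) * cmod (g x) \<le> (cmod (f x))\<^sup>2 + (cmod (g x))\<^sup>2"
        by linarith
      then show "norm (f x * cnj (g x)) \<le> norm ((cmod (f x))\<^sup>2 + (cmod (g x))\<^sup>2)"
        by (simp add: norm_mult)
    qed
  qed
qed

lemma l2_normsq_inner: "f \<in> L2 \<Longrightarrow> l2_inner f f = complex_of_real (l2_normsq f)"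
proof -
  have "(\<lambda>x. f x * cnj (f x)) = (\<lambda>x. complex_of_real ((cmod (f x))\<^sup>2))"
    by (simp add: complex_norm_square[symmetric])
  then show ?thesis unfolding l2_inner_def l2_normsq_def
    by (simp only: integral_complex_of_real)
qed

lemma l2_normsq_nonneg: "0 \<le> l2_normsq f"
  unfolding l2_normsq_def by simp

lemma l2_inner_add_left: "f \<in> L2 \<Longrightarrow> g \<in> L2 \<Longrightarrow> h \<in> L2 \<Longrightarrow>
   l2_inner (\<lambda>x. f x + g x) h = l2_inner f h + l2_inner g h"
  unfolding l2_inner_def
  by (simp add: distrib_right L2_inner_integrable)

lemma l2_inner_diff_left: "f \<in> L2 \<Longrightarrow> g \<in> L2 \<Longrightarrow> h \<in> L2 \<Longrightarrow>
   l2_inner (\<lambda>x. f x - g x) h = l2_inner f h - l2_inner g h"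
  unfolding l2_inner_def
  by (simp add: left_diff_distrib L2_inner_integrable)

lemma l2_inner_scale_left: "l2_inner (\<lambda>x. c * f x) h = c * l2_inner f h"
  unfolding l2_inner_def by (simp add: mult.assoc)

lemma l2_inner_cnj: "l2_inner g f = cnj (l2_inner f g)"
proof -
  have "l2_inner g f = integral\<^sup>L lborel (\<lambda>x. cnj (f x * cnj (g x)))"
    unfolding l2_inner_def by (simp add: mult.commute)
  then show ?thesis unfolding l2_inner_def by (simp only: Bochner_Integration.integral_cnj)
qed

lemma l2_inner_sum_left: "finite F \<Longrightarrow> (\<And>i. i \<in> F \<Longrightarrow> f i \<in> L2) \<Longrightarrow> h \<in> L2 \<Longrightarrow>
   l2_inner (\<lambda>x. \<Sum>i\<in>F. f i x) h = (\<Sum>i\<in>F. l2_inner (f i) h)"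
proof (induction F rule: finite_induct)
  case empty then show ?case by (simp add: l2_inner_def)
next
  case (insert i F)
  have "l2_inner (\<lambda>x. \<Sum>i\<in>insert i F. f i x) h = l2_inner (\<lambda>x. f i x + (\<Sum>i\<in>F. f i x)) h"
    using insert by simp
  also have "\<dots> = l2_inner (f i) h + l2_inner (\<lambda>x. \<Sum>i\<in>F. f i x) h"
    using insert by (intro l2_inner_add_left L2_sum) auto
  finally show ?case using insert by simp
qed

lemma l2_inner_sum_right: "finite F \<Longrightarrow> (\<And>i. i \<in> F \<Longrightarrow> f i \<in> L2) \<Longrightarrow> h \<in> L2 \<Longrightarrow>
   l2_inner h (\<lambda>x. \<Sum>i\<in>F. f i x) = (\<Sum>i\<in>F. l2_inner h (f i))"
  by (subst l2_inner_cnj) (simp add: l2_inner_sum_left flip: l2_inner_cnj)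

lemma l2_inner_scale_right: "l2_inner h (\<lambda>x. c * f x) = cnj c * l2_inner h f"
  by (subst l2_inner_cnj) (simp add: l2_inner_scale_left flip: l2_inner_cnj)

lemma projection_identity:
  assumes h: "h \<in> L2" and F: "finite F" and u: "\<And>m. m \<in> F \<Longrightarrow> u m \<in> L2"
    and orth: "\<And>m k. m \<in> F \<Longrightarrow> k \<in> F \<Longrightarrow> l2_inner (u m) (u k) = (if m = k then 1 else 0)"
  shows "l2_normsq (\<lambda>x. h x - (\<Sum>m\<in>F. d m * u m x)) =
     l2_normsq h - (\<Sum>m\<in>F. (cmod (l2_inner h (u m)))\<^sup>2) + (\<Sum>m\<in>F. (cmod (l2_inner h (u m) - d m))\<^sup>2)"
proof -
  define p where "p = (\<lambda>x. \<Sum>m\<in>F. d m * u m x)"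
  define c where "c = (\<lambda>m. l2_inner h (u m))"
  have pL: "p \<in> L2" unfolding p_def using F u by (intro L2_sum L2_scale) auto
  have hp: "l2_inner h p = (\<Sum>m\<in>F. cnj (d m) * c m)"
    unfolding p_def c_def using F u h
    by (simp add: l2_inner_sum_right L2_scale l2_inner_scale_right)
  have ph: "l2_inner p h = (\<Sum>m\<in>F. d m * cnj (c m))"
    using hp by (subst l2_inner_cnj) simp
  have pp: "l2_inner p p = (\<Sum>m\<in>F. d m * cnj (d m))"
  proof -
    have "l2_inner p p = (\<Sum>m\<in>F. d m * l2_inner (u m) p)"
      unfolding p_def using F u pL[unfolded p_def]
      by (simp add: l2_inner_sum_left L2_scale l2_inner_scale_left)
    also have "\<dots> = (\<Sum>m\<in>F. d m * (\<Sum>k\<in>F. cnj (d k) * l2_inner (u m) (u k)))"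
      unfolding p_def using F u
      by (intro sum.cong refl) (simp add: l2_inner_sum_right L2_scale l2_inner_scale_right)
    also have "\<dots> = (\<Sum>m\<in>F. d m * cnj (d m))"
      using F by (intro sum.cong refl) (simp add: orth if_distrib cong: if_cong)
    finally show ?thesis .
  qed
  have hpL: "(\<lambda>x. h x - p x) \<in> L2" using h pL by (rule L2_diff)
  have "complex_of_real (l2_normsq (\<lambda>x. h x - p x)) = l2_inner (\<lambda>x. h x - p x) (\<lambda>x. h x - p x)"
    using hpL by (simp add: l2_normsq_inner)
  also have "\<dots> = l2_inner h (\<lambda>x. h x - p x) - l2_inner p (\<lambda>x. h x - p x)"
    using h pL hpL by (simp add: l2_inner_diff_left)
  also have "l2_inner h (\<lambda>x. h x - p x) = l2_inner h h - l2_inner h p"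
    using h pL by (subst l2_inner_cnj) (simp add: l2_inner_diff_left flip: l2_inner_cnj)
  also have "l2_inner p (\<lambda>x. h x - p x) = l2_inner p h - l2_inner p p"
    using h pL by (subst l2_inner_cnj) (simp add: l2_inner_diff_left flip: l2_inner_cnj)
  finally have eq: "complex_of_real (l2_normsq (\<lambda>x. h x - p x)) =
      l2_inner h h - (\<Sum>m\<in>F. cnj (d m) * c m) - ((\<Sum>m\<in>F. d m * cnj (c m)) - (\<Sum>m\<in>F. d m * cnj (d m)))"
    using hp ph pp by simp
  have sq: "\<And>z. complex_of_real ((cmod z)\<^sup>2) = z * cnj z" by (simp add: complex_norm_square[symmetric])
  have "complex_of_real (l2_normsq h - (\<Sum>m\<in>F. (cmod (c m))\<^sup>2) + (\<Sum>m\<in>F. (cmod (c m - d m))\<^sup>2))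
      = l2_inner h h - (\<Sum>m\<in>F. c m * cnj (c m)) + (\<Sum>m\<in>F. (c m - d m) * cnj (c m - d m))"
    using h by (simp only: of_real_add of_real_diff of_real_sum sq l2_normsq_inner[symmetric])
  also have "\<dots> = l2_inner h h - (\<Sum>m\<in>F. cnj (d m) * c m) - ((\<Sum>m\<in>F. d m * cnj (c m)) - (\<Sum>m\<in>F. d m * cnj (d m)))"
    by (simp add: algebra_simps sum.distrib sum_subtractf)
  finally have eq2: "complex_of_real (l2_normsq h - (\<Sum>m\<in>F. (cmod (c m))\<^sup>2) + (\<Sum>m\<in>F. (cmod (c m - d m))\<^sup>2))
      = l2_inner h h - (\<Sum>m\<in>F. cnj (d m) * c m) - ((\<Sum>m\<in>F. d m * cnj (c m)) - (\<Sum>m\<in>F. d m * cnj (d m)))" .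
  have "complex_of_real (l2_normsq (\<lambda>x. h x - p x)) = complex_of_real (l2_normsq h - (\<Sum>m\<in>F. (cmod (c m))\<^sup>2) + (\<Sum>m\<in>F. (cmod (c m - d m))\<^sup>2))"
    using eq eq2 by (rule trans[OF _ sym])
  then show ?thesis unfolding p_def c_def of_real_eq_iff .
qed

definition E :: "real \<Rightarrow> int \<Rightarrow> real \<Rightarrow> complex" where
  "E b m t = exp (2 * pi * \<i> * complex_of_real (of_int m * b * t))"

definition u :: "real \<Rightarrow> real \<Rightarrow> int \<Rightarrow> real \<Rightarrow> complex" where
  "u b c m t = complex_of_real (sqrt b) * E b m t * complex_of_real (indicator {c..<c+1/b} t)"

lemma E_alt: "E b m t = exp ((2 * pi * \<i> * of_int m * of_real b) * of_real t)"
  unfolding E_def by (simp add: mult.assoc mult.left_commute)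

lemma continuous_E: "continuous_on A (E b m)"
  unfolding E_alt by (intro continuous_intros)

lemma E_mult: "E b m t * E b k t = E b (m + k) t"
  unfolding E_def by (simp add: exp_add[symmetric] algebra_simps)

lemma E_cnj: "cnj (E b m t) = E b (- m) t"
  unfolding E_def by (simp add: exp_cnj)

lemma E_zero[simp]: "E b 0 t = 1" unfolding E_def by simp
lemma E_zero_fun: "E b 0 = (\<lambda>_. 1)" by (rule ext) simp

lemma norm_E[simp]: "cmod (E b m t) = 1"
  unfolding E_def by (simp add: norm_exp_eq_Re)

lemma E_period: "b \<noteq> 0 \<Longrightarrow> E b m (t + 1/b) = E b m t"
proof -
  assume b: "b \<noteq> 0"
  have "2 * pi * \<i> * complex_of_real (of_int m * b * (t + 1/b)) =
        2 * pi * \<i> * complex_of_real (of_int m * b * t) + 2 * pi * \<i> * of_int m"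
    using b by (simp add: field_simps)
  then have "E b m (t + 1/b) = E b m t * exp (2 * pi * \<i> * of_int m)"
    unfolding E_def by (simp add: exp_add)
  also have "exp (2 * pi * \<i> * of_int m) = 1"
    using exp_2pi_1_int[of m] by (simp add: mult_ac)
  finally show ?thesis by simp
qed

lemma borel_E[measurable]: "E b m \<in> borel_measurable borel"
  using continuous_E by (rule borel_measurable_continuous_onI)

lemma integral_exp_gen:
  assumes "c \<le> d" "a \<noteq> 0"
  shows "integral {c..d} (\<lambda>t. exp (a * complex_of_real t)) = (exp (a * of_real d) - exp (a * of_real c)) / a"
proof -
  have "\<And>t. t \<in> {c..d} \<Longrightarrow> ((\<lambda>x. exp (a * x) / a) has_vector_derivative exp (a * t)) (at t within {c..d})"
    using assms
    by (intro derivative_eq_intros has_complex_derivative_imp_has_vector_derivative [unfolded o_def] | simp)+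
  then have "((\<lambda>t. exp (a * of_real t)) has_integral exp (a * complex_of_real d)/a - exp (a * of_real c)/a) {c..d}"
    by (meson fundamental_theorem_of_calculus \<open>c \<le> d\<close>)
  then show ?thesis
    by (simp add: diff_divide_distrib integral_unique)
qed

lemma lint_Ico:
  fixes g :: "real \<Rightarrow> complex"
  assumes g: "continuous_on UNIV g" and cd: "c \<le> d"
  shows "(LINT t|lborel. g t * complex_of_real (indicator {c..<d} t)) = integral {c..d} g"
proof -
  have gm: "g \<in> borel_measurable borel" using g by (rule borel_measurable_continuous_onI)
  have int: "integrable lborel (\<lambda>x. indicator {c..d} x *\<^sub>R g x)"
    by (rule borel_integrable_compact) (auto intro: continuous_on_subset[OF g])
  have "(LINT t|lborel. g t * complex_of_real (indicator {c..<d} t)) = (LINT t|lborel. indicator {c..d} t *\<^sub>R g t)"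
  proof (rule integral_cong_AE)
    show "AE x in lborel. g x * complex_of_real (indicator {c..<d} x) = indicator {c..d} x *\<^sub>R g x"
      using AE_lborel_singleton[of d] by eventually_elim (auto simp: indicator_def scaleR_conv_of_real)
  qed (use gm in auto)
  also have "\<dots> = integral {c..d} g"
    using set_borel_integral_eq_integral(2)[of "{c..d}" g] int
    unfolding set_integrable_def set_lebesgue_integral_def by simp
  finally show ?thesis .
qed

lemma integral_E:
  assumes b: "b > 0"
  shows "integral {c..c+1/b} (E b j) = (if j = 0 then 1/b else 0)"
proof (cases "j = 0")
  case True then show ?thesis using b by (simp add: E_zero_fun scaleR_conv_of_real)
next
  case False
  define a where "a = 2 * pi * \<i> * of_int j * of_real b"
  have a: "a \<noteq> 0" using False b by (simp add: a_def)
  have "integral {c..c+1/b} (E b j) = integral {c..c+1/b} (\<lambda>t. exp (a * complex_of_real t))"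
    unfolding E_alt a_def by simp
  also have "\<dots> = (exp (a * of_real (c+1/b)) - exp (a * of_real c)) / a"
    using b a by (intro integral_exp_gen) auto
  also have "exp (a * of_real (c+1/b)) = exp (a * of_real c)"
    using E_period[of b j c] b unfolding E_alt a_def by simp
  finally show ?thesis using False by simp
qed

lemma u_L2: assumes "b > 0" shows "u b c m \<in> L2"
proof -
  have "(\<lambda>t. (complex_of_real (sqrt b) * E b m t) * complex_of_real (indicator {c..<c+1/b} t)) \<in> L2"
  proof (rule L2_mult_bounded[where B="sqrt b"])
    show "(\<lambda>t. complex_of_real (indicator {c..<c + 1 / b} t)) \<in> L2"
    proof (rule L2_I)
      show "(\<lambda>t. complex_of_real (indicator {c..<c + 1 / b} t)) \<in> borel_measurable lborel" by simp
      have "integrable lborel (indicator {c..<c + 1 / b} :: real \<Rightarrow> real)"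
        by (rule integrable_real_indicator) (use assms in auto)
      moreover have "(\<lambda>x. (cmod (complex_of_real (indicator {c..<c + 1 / b} x)))\<^sup>2) = (indicator {c..<c + 1 / b} :: real \<Rightarrow> real)"
        by (auto simp: indicator_def)
      ultimately show "integrable lborel (\<lambda>x. (cmod (complex_of_real (indicator {c..<c + 1 / b} x)))\<^sup>2)"
        by simp
    qed
  qed (use assms in \<open>auto simp: norm_mult\<close>)
  then show ?thesis unfolding u_def[abs_def] by (simp add: mult.assoc)
qed

lemma u_orth:
  assumes b: "b > 0"
  shows "l2_inner (u b c m) (u b c k) = (if m = k then 1 else 0)"
proof -
  have "l2_inner (u b c m) (u b c k) = (LINT t|lborel. (of_real b * E b (m - k) t) * complex_of_real (indicator {c..<c+1/b} t))"
    unfolding l2_inner_def u_def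
  proof (intro Bochner_Integration.integral_cong refl)
    fix t
    have "cnj (E b k t) = E b (-k) t" by (rule E_cnj)
    moreover have "E b m t * E b (-k) t = E b (m - k) t" by (simp add: E_mult)
    moreover have "complex_of_real (sqrt b) * complex_of_real (sqrt b) = of_real b"
      using b by (simp flip: of_real_mult)
    ultimately show "complex_of_real (sqrt b) * E b m t * complex_of_real (indicator {c..<c + 1 / b} t) *
         cnj (complex_of_real (sqrt b) * E b k t * complex_of_real (indicator {c..<c + 1 / b} t)) =
         complex_of_real b * E b (m - k) t * complex_of_real (indicator {c..<c + 1 / b} t)"
      by (auto simp: indicator_def algebra_simps)
  qed
  also have "\<dots> = integral {c..c+1/b} (\<lambda>t. of_real b * E b (m - k) t)"
    using b by (intro lint_Ico continuous_intros continuous_E) auto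
  also have "\<dots> = of_real b * integral {c..c+1/b} (E b (m - k))"
    by simp
  also have "\<dots> = (if m = k then 1 else 0)"
    using b by (simp add: integral_E)
  finally show ?thesis .
qed

definition TP :: "real \<Rightarrow> (real \<Rightarrow> complex) \<Rightarrow> bool" where
  "TP b p \<longleftrightarrow> (\<exists>F d. finite F \<and> (\<forall>t. p t = (\<Sum>m\<in>F. d m * E b m t)))"

lemma TP_I: "finite F \<Longrightarrow> (\<And>t. p t = (\<Sum>m\<in>F. d m * E b m t)) \<Longrightarrow> TP b p"
  unfolding TP_def by blast

lemma TP_const: "TP b (\<lambda>t. c)"
  by (rule TP_I[of "{0}" _ "\<lambda>_. c"]) auto

lemma TP_E: "TP b (E b m)"
  by (rule TP_I[of "{m}" _ "\<lambda>_. 1"]) auto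

lemma sum_extend:
  assumes "finite G" "F \<subseteq> G"
  shows "(\<Sum>m\<in>F. d m * E b m t) = (\<Sum>m\<in>G. (if m \<in> F then d m else 0) * E b m t)"
proof -
  have "(\<Sum>m\<in>G. (if m \<in> F then d m else 0) * E b m t) = (\<Sum>m\<in>G. if m \<in> F then d m * E b m t else 0)"
    by (intro sum.cong) auto
  also have "\<dots> = (\<Sum>m\<in>G \<inter> F. d m * E b m t)"
    using assms by (simp add: sum.inter_restrict)
  also have "G \<inter> F = F" using assms by auto
  finally show ?thesis by simp
qed

lemma TP_add: assumes "TP b p" "TP b q" shows "TP b (\<lambda>t. p t + q t)"
proof -
  obtain F d where F: "finite F" "\<And>t. p t = (\<Sum>m\<in>F. d m * E b m t)" using assms(1) unfolding TP_def by blast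
  obtain G e where G: "finite G" "\<And>t. q t = (\<Sum>m\<in>G. e m * E b m t)" using assms(2) unfolding TP_def by blast
  show ?thesis
  proof (rule TP_I[of "F \<union> G" _ "\<lambda>m. (if m \<in> F then d m else 0) + (if m \<in> G then e m else 0)"])
    show "finite (F \<union> G)" using F G by simp
    fix t
    show "p t + q t = (\<Sum>m\<in>F \<union> G. ((if m \<in> F then d m else 0) + (if m \<in> G then e m else 0)) * E b m t)"
      unfolding F(2) G(2) using F(1) G(1)
      by (simp add: distrib_right sum.distrib sum_extend[of "F \<union> G" F] sum_extend[of "F \<union> G" G])
  qed
qed

lemma TP_scale: assumes "TP b p" shows "TP b (\<lambda>t. c * p t)"
proof -
  obtain F d where F: "finite F" "\<And>t. p t = (\<Sum>m\<in>F. d m * E b m t)" using assms(1) unfolding TP_def by blast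
  show ?thesis
    by (rule TP_I[of F _ "\<lambda>m. c * d m"]) (use F in \<open>auto simp: sum_distrib_left mult.assoc\<close>)
qed

lemma TP_sum: "finite I \<Longrightarrow> (\<And>i. i \<in> I \<Longrightarrow> TP b (p i)) \<Longrightarrow> TP b (\<lambda>t. \<Sum>i\<in>I. p i t)"
  by (induction I rule: finite_induct) (auto intro: TP_add TP_const)

lemma TP_E_mult: assumes "TP b q" shows "TP b (\<lambda>t. E b m t * q t)"
proof -
  obtain F d where F: "finite F" "\<And>t. q t = (\<Sum>m\<in>F. d m * E b m t)" using assms(1) unfolding TP_def by blast
  show ?thesis
  proof (rule TP_I[of "(+) m ` F" _ "\<lambda>k. d (k - m)"])
    show "finite ((+) m ` F)" using F by simp
    fix t
    have "(\<Sum>k\<in>(+) m ` F. d (k - m) * E b k t) = (\<Sum>j\<in>F. d j * E b (m + j) t)"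
      by (subst sum.reindex) (auto simp: inj_on_def)
    also have "\<dots> = E b m t * q t"
      unfolding F(2) by (simp add: sum_distrib_left E_mult[symmetric] mult_ac)
    finally show "E b m t * q t = (\<Sum>k\<in>(+) m ` F. d (k - m) * E b k t)" by simp
  qed
qed

lemma TP_mult: assumes "TP b p" "TP b q" shows "TP b (\<lambda>t. p t * q t)"
proof -
  obtain F d where F: "finite F" "\<And>t. p t = (\<Sum>m\<in>F. d m * E b m t)" using assms(1) unfolding TP_def by blast
  have "TP b (\<lambda>t. \<Sum>m\<in>F. d m * (E b m t * q t))"
    using F(1) by (intro TP_sum TP_scale TP_E_mult assms(2))
  moreover have "(\<lambda>t. \<Sum>m\<in>F. d m * (E b m t * q t)) = (\<lambda>t. p t * q t)"
    unfolding F(2) by (simp add: sum_distrib_left mult_ac)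
  ultimately show ?thesis by simp
qed

lemma bounded_linear_complex_decomp:
  assumes "bounded_linear (g :: complex \<Rightarrow> real)"
  shows "g z = Re z * g 1 + Im z * g \<i>"
proof -
  interpret bounded_linear g by fact
  have "z = Re z *\<^sub>R 1 + Im z *\<^sub>R \<i>" by (simp add: complex_eq_iff)
  then have "g z = g (Re z *\<^sub>R 1 + Im z *\<^sub>R \<i>)" by simp
  also have "\<dots> = Re z * g 1 + Im z * g \<i>" by (simp add: add scale)
  finally show ?thesis .
qed

lemma TP_real_poly:
  assumes "real_polynomial_function (g :: complex \<Rightarrow> real)"
  shows "TP b (\<lambda>t. complex_of_real (g (E b 1 t)))"
  using assms
proof (induction g rule: real_polynomial_function.induct)
  case (linear g)
  have re: "complex_of_real (Re (E b 1 t)) = (E b 1 t + E b (-1) t) / 2" for t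
    using complex_add_cnj[of "E b 1 t"] by (simp add: E_cnj)
  have im: "complex_of_real (Im (E b 1 t)) = (E b 1 t - E b (-1) t) / (2 * \<i>)" for t
    using complex_diff_cnj[of "E b 1 t"] by (simp add: E_cnj field_simps)
  have "(\<lambda>t. complex_of_real (g (E b 1 t))) =
      (\<lambda>t. (of_real (g 1) / 2) * E b 1 t + (of_real (g 1) / 2) * E b (-1) t
          + (of_real (g \<i>) / (2 * \<i>)) * E b 1 t + (- of_real (g \<i>) / (2 * \<i>)) * E b (-1) t)"
    by (rule ext, subst bounded_linear_complex_decomp[OF linear])
       (simp add: re im field_simps)
  moreover have "TP b \<dots>"
    by (intro TP_add TP_scale TP_E)
  ultimately show ?case by simp
next
  case (const c)
  then show ?case by (rule TP_const)
next
  case (add f g)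
  then show ?case by (simp add: TP_add)
next
  case (mult f g)
  then show ?case by (simp add: TP_mult)
qed

lemma TP_poly:
  assumes "polynomial_function (P :: complex \<Rightarrow> complex)"
  shows "TP b (\<lambda>t. P (E b 1 t))"
proof -
  have re: "real_polynomial_function (\<lambda>z. Re (P z))"
    using assms bounded_linear_Re unfolding polynomial_function_def o_def by blast
  have im: "real_polynomial_function (\<lambda>z. Im (P z))"
    using assms bounded_linear_Im unfolding polynomial_function_def o_def by blast
  have "TP b (\<lambda>t. complex_of_real (Re (P (E b 1 t))) + \<i> * complex_of_real (Im (P (E b 1 t))))"
    by (intro TP_add TP_scale TP_real_poly re im)
  then show ?thesis by (simp add: complex_eq[symmetric])
qed

lemma E1_eq_imp:
  assumes b: "b > 0" and x: "x \<in> {c..c+1/b}" and y: "y \<in> {c..c+1/b}" and eq: "E b 1 x = E b 1 y"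
  shows "x = y \<or> {x, y} = {c, c + 1/b}"
proof -
  obtain n :: int where n: "2 * pi * \<i> * complex_of_real (b * x) = 2 * pi * \<i> * complex_of_real (b * y) + (of_int (2 * n) * pi) * \<i>"
    using eq unfolding E_def exp_eq by auto
  then have "\<i> * complex_of_real (2 * pi * (b * x)) = \<i> * complex_of_real (2 * pi * (b * y) + 2 * pi * of_int n)"
    by (simp add: algebra_simps)
  then have "complex_of_real (2 * pi * (b * x)) = complex_of_real (2 * pi * (b * y) + 2 * pi * of_int n)"
    using mult_cancel_left[of \<i>] by simp
  then have "2 * pi * (b * x) = 2 * pi * (b * y) + 2 * pi * of_int n"
    using of_real_eq_iff by blast
  then have "pi * (2 * (b * x)) = pi * (2 * (b * y + of_int n))" by (simp add: algebra_simps)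
  then have "b * x = b * y + of_int n" using pi_gt_zero by simp
  then have xy: "x - y = of_int n / b" using b by (simp add: field_simps)
  have "\<bar>x - y\<bar> \<le> 1/b" using x y by auto
  then have "\<bar>of_int n / b\<bar> \<le> 1 / b" using xy by simp
  then have "\<bar>real_of_int n\<bar> \<le> 1" using b by (simp add: abs_div divide_le_cancel)
  then have "n = 0 \<or> n = 1 \<or> n = -1" by linarith
  then show ?thesis
  proof (elim disjE)
    assume "n = 0" then show ?thesis using xy by simp
  next
    assume "n = 1" then have "x = y + 1/b" using xy by simp
    then show ?thesis using x y by auto
  next
    assume "n = -1" then have "y = x + 1/b" using xy by simp
    then show ?thesis using x y by auto
  qed
qed

lemma trig_approx:
  fixes \<phi> :: "real \<Rightarrow> complex"
  assumes b: "b > 0" and cont: "continuous_on {c..c+1/b} \<phi>" and ends: "\<phi> c = \<phi> (c + 1/b)"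
    and e: "e > 0"
  shows "\<exists>F d. finite F \<and> (\<forall>t\<in>{c..c+1/b}. cmod (\<phi> t - (\<Sum>m\<in>F. d m * E b m t)) < e)"
proof -
  define T where "T = {c..c+1/b}"
  define K where "K = E b 1 ` T"
  have contE: "continuous_on T (E b 1)" by (rule continuous_E)
  have cT: "compact T" unfolding T_def by simp
  have cK: "compact K" unfolding K_def using contE cT by (rule compact_continuous_image)
  have q: "quotient_map (top_of_set T) (top_of_set K) (E b 1)"
  proof (rule continuous_imp_quotient_map)
    show "continuous_map (top_of_set T) (top_of_set K) (E b 1)"
      using contE by (auto simp: continuous_map_in_subtopology K_def)
    show "compact_space (top_of_set T)" using cT by (simp add: compact_space_subtopology)
    show "Hausdorff_space (top_of_set K)" by (simp add: Hausdorff_space_subtopology)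
    show "E b 1 ` topspace (top_of_set T) = topspace (top_of_set K)" by (simp add: K_def)
  qed
  have fib: "\<phi> x = \<phi> y" if "x \<in> topspace (top_of_set T)" "y \<in> topspace (top_of_set T)" "E b 1 x = E b 1 y" for x y
  proof -
    have "x = y \<or> {x, y} = {c, c + 1/b}"
      using E1_eq_imp[OF b, of x c y] that unfolding T_def by simp
    then show ?thesis unfolding doubleton_eq_iff using ends by auto
  qed
  have hc: "continuous_map (top_of_set T) euclidean \<phi>" using cont unfolding T_def by simp
  obtain g where g: "continuous_map (top_of_set K) euclidean g"
    and "g ` topspace (top_of_set K) = \<phi> ` topspace (top_of_set T)"
    and gf: "\<And>x. x \<in> topspace (top_of_set T) \<Longrightarrow> g (E b 1 x) = \<phi> x"
    by (rule quotient_map_lift_exists[OF q hc fib]) blast+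
  have gc: "continuous_on K g" using g by simp
  obtain P where P: "polynomial_function P" "\<forall>z\<in>K. norm (g z - P z) < e"
    using Stone_Weierstrass_polynomial_function[OF cK gc e] by blast
  obtain F d where F: "finite F" "\<And>t. P (E b 1 t) = (\<Sum>m\<in>F. d m * E b m t)"
    using TP_poly[OF P(1), of b] unfolding TP_def by blast
  show ?thesis
  proof (intro exI conjI ballI)
    show "finite F" by fact
    fix t assume t: "t \<in> {c..c+1/b}"
    have "E b 1 t \<in> K" using t unfolding K_def T_def by auto
    then have "cmod (g (E b 1 t) - P (E b 1 t)) < e" using P(2) by auto
    then show "cmod (\<phi> t - (\<Sum>m\<in>F. d m * E b m t)) < e"
      using gf[of t] t F(2)[of t] unfolding T_def by simp
  qed
qed

definition clipr :: "real \<Rightarrow> real \<Rightarrow> real" where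
  "clipr M x = max (-M) (min M x)"

definition clip :: "real \<Rightarrow> complex \<Rightarrow> complex" where
  "clip M z = complex_of_real (clipr M (Re z)) + \<i> * complex_of_real (clipr M (Im z))"

definition rho :: "real \<Rightarrow> real \<Rightarrow> nat \<Rightarrow> real \<Rightarrow> real" where
  "rho c d k t = min 1 (real k * max 0 (min (t - c) (d - t)))"

lemma clip_cont: "continuous_on UNIV (clip M)"
  unfolding clip_def clipr_def by (intro continuous_intros)

lemma Re_clip[simp]: "Re (clip M z) = clipr M (Re z)" and Im_clip[simp]: "Im (clip M z) = clipr M (Im z)"
  by (simp_all add: clip_def)

lemma clip_zero[simp]: "M \<ge> 0 \<Longrightarrow> clip M 0 = 0"
  by (simp add: complex_eq_iff clipr_def)

lemma abs_clipr: "M \<ge> 0 \<Longrightarrow> \<bar>clipr M x\<bar> \<le> \<bar>x\<bar>"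
  by (simp add: clipr_def)

lemma abs_clipr2: "M \<ge> 0 \<Longrightarrow> \<bar>clipr M x\<bar> \<le> M"
  by (simp add: clipr_def)

lemma norm_clip_le: assumes "M \<ge> 0" shows "cmod (clip M z) \<le> cmod z"
proof -
  have "(Re (clip M z))\<^sup>2 \<le> (Re z)\<^sup>2" using abs_clipr[OF assms, of "Re z"]
    by (simp add: abs_le_square_iff)
  moreover have "(Im (clip M z))\<^sup>2 \<le> (Im z)\<^sup>2" using abs_clipr[OF assms, of "Im z"]
    by (simp add: abs_le_square_iff)
  ultimately show ?thesis unfolding norm_complex_def by simp
qed

lemma norm_clip_bound: assumes "M \<ge> 0" shows "cmod (clip M z) \<le> 2 * M"
proof -
  have "cmod (clip M z) \<le> \<bar>Re (clip M z)\<bar> + \<bar>Im (clip M z)\<bar>" by (rule cmod_le)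
  then show ?thesis using abs_clipr2[OF assms, of "Re z"] abs_clipr2[OF assms, of "Im z"] by simp
qed

lemma clip_id: assumes "cmod z \<le> M" shows "clip M z = z"
proof -
  have "\<bar>Re z\<bar> \<le> M" "\<bar>Im z\<bar> \<le> M" using abs_Re_le_cmod[of z] abs_Im_le_cmod[of z] assms by linarith+
  then show ?thesis by (simp add: complex_eq_iff clipr_def)
qed

lemma rho_cont: "continuous_on UNIV (rho c d k)"
  unfolding rho_def by (intro continuous_intros)

lemma rho_nonneg: "0 \<le> rho c d k t" unfolding rho_def by simp
lemma rho_le1: "rho c d k t \<le> 1" unfolding rho_def by simp
lemma rho_out: "t \<notin> {c<..<d} \<Longrightarrow> rho c d k t = 0"
  unfolding rho_def by auto

lemma rho_eventually:
  assumes "t \<in> {c<..<d}"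
  shows "eventually (\<lambda>k. rho c d k t = 1) sequentially"
proof -
  define m where "m = min (t - c) (d - t)"
  have m: "m > 0" using assms by (simp add: m_def)
  obtain N :: nat where N: "real N \<ge> 1 / m" using real_arch_simple by blast
  show ?thesis
  proof (rule eventually_sequentiallyI[of N])
    fix k assume "N \<le> k"
    then have "real k \<ge> 1 / m" using N by linarith
    then have "real k * m \<ge> 1" using m by (simp add: field_simps)
    then show "rho c d k t = 1" unfolding rho_def m_def[symmetric] using m by simp
  qed
qed

lemma borel_rho[measurable]: "rho c d k \<in> borel_measurable borel"
  using rho_cont by (rule borel_measurable_continuous_onI)

lemma borel_clip[measurable]: "clip K \<in> borel_measurable borel"
  by (rule borel_measurable_continuous_onI[OF clip_cont])

lemma borel_clip_comp: "f \<in> borel_measurable M \<Longrightarrow> (\<lambda>x. clip K (f x)) \<in> borel_measurable M"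
  by (rule borel_measurable_continuous_on[OF clip_cont])

lemma sq_diff_le: "(cmod (x - z))\<^sup>2 \<le> 2 * (cmod (x - y))\<^sup>2 + 2 * (cmod (y - z))\<^sup>2"
  using sq_add_le[of "x - y" "y - z"] by simp

lemma density_stage1:
  assumes h: "h \<in> L2" and supp: "\<And>t. t \<notin> {c..<d} \<Longrightarrow> h t = 0" and e: "e > 0"
  shows "\<exists>J. integrable lborel (\<lambda>t. (cmod (h t - complex_of_real (rho c d J t) * clip (real J) (h t)))\<^sup>2)
     \<and> l2_normsq (\<lambda>t. h t - complex_of_real (rho c d J t) * clip (real J) (h t)) < e"
proof -
  define s where "s = (\<lambda>(j::nat) t. (cmod (h t - complex_of_real (rho c d j t) * clip (real j) (h t)))\<^sup>2)"
  have hm[measurable]: "h \<in> borel_measurable borel" using L2_meas[OF h] by simp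
  have sm: "s j \<in> borel_measurable lborel" for j
    unfolding s_def by measurable
  have w: "integrable lborel (\<lambda>t. 4 * (cmod (h t))\<^sup>2)" using L2_int[OF h] by simp
  have lim: "AE t in lborel. (\<lambda>j. s j t) \<longlonglongrightarrow> 0"
    using AE_lborel_singleton[of c]
  proof eventually_elim
    case (elim t)
    show ?case
    proof (cases "t \<in> {c<..<d}")
      case True
      have "eventually (\<lambda>j. rho c d j t = 1) sequentially" using rho_eventually[OF True] .
      moreover have "eventually (\<lambda>j. cmod (h t) \<le> real j) sequentially"
      proof -
        obtain N :: nat where "real N \<ge> cmod (h t)" using real_arch_simple by blast
        then show ?thesis by (intro eventually_sequentiallyI[of N]) auto
      qed
      ultimately have "eventually (\<lambda>j. s j t = 0) sequentially"
        by eventually_elim (simp add: s_def clip_id)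
      then show ?thesis by (rule tendsto_eventually)
    next
      case False
      then have "t \<notin> {c..<d}" using elim by auto
      then have "s j t = 0" for j using supp[of t] rho_out[OF False] by (simp add: s_def)
      then show ?thesis by simp
    qed
  qed
  have bound: "AE t in lborel. norm (s j t) \<le> 4 * (cmod (h t))\<^sup>2" for j
  proof (rule AE_I2)
    fix t
    have "cmod (complex_of_real (rho c d j t) * clip (real j) (h t)) \<le> cmod (h t)"
    proof -
      have "cmod (complex_of_real (rho c d j t) * clip (real j) (h t)) = rho c d j t * cmod (clip (real j) (h t))"
        using rho_nonneg by (simp add: norm_mult)
      also have "\<dots> \<le> 1 * cmod (h t)"
        using rho_nonneg rho_le1 norm_clip_le[of "real j" "h t"] by (intro mult_mono) auto
      finally show ?thesis by simp
    qed
    then have "cmod (h t - complex_of_real (rho c d j t) * clip (real j) (h t)) \<le> 2 * cmod (h t)"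
      using norm_triangle_ineq4[of "h t" "complex_of_real (rho c d j t) * clip (real j) (h t)"] by linarith
    then have "(cmod (h t - complex_of_real (rho c d j t) * clip (real j) (h t)))\<^sup>2 \<le> (2 * cmod (h t))\<^sup>2"
      by (intro power_mono) auto
    then show "norm (s j t) \<le> 4 * (cmod (h t))\<^sup>2" by (simp add: s_def power_mult_distrib)
  qed
  have conv: "(\<lambda>j. integral\<^sup>L lborel (s j)) \<longlonglongrightarrow> integral\<^sup>L lborel (\<lambda>t. 0::real)"
    using Bochner_Integration.integral_dominated_convergence[OF _ sm w lim bound] by simp
  have ints: "integrable lborel (s j)" for j
    by (rule Bochner_Integration.integrable_dominated_convergence2[OF _ sm w lim bound]) simp
  from conv have "eventually (\<lambda>j. integral\<^sup>L lborel (s j) < e) sequentially"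
    using e by (simp add: order_tendstoD(2))
  then obtain J where "integral\<^sup>L lborel (s J) < e" by (auto simp: eventually_sequentially)
  then show ?thesis using ints[of J] unfolding s_def l2_normsq_def by blast
qed


lemma AE_not_negligible:
  assumes "negligible N" shows "AE x in lborel. x \<notin> N"
proof -
  have "N \<in> null_sets lebesgue" using assms negligible_iff_null_sets by blast
  then have "AE x in lebesgue. x \<notin> N" by (rule AE_not_in)
  then show ?thesis by (simp add: AE_completion_iff)
qed

lemma density:
  assumes h: "h \<in> L2" and supp: "\<And>t. t \<notin> {c..<d} \<Longrightarrow> h t = 0" and e: "e > 0"
  shows "\<exists>\<phi>. continuous_on UNIV \<phi> \<and> (\<forall>t. t \<notin> {c<..<d} \<longrightarrow> \<phi> t = 0) \<and>
     integrable lborel (\<lambda>t. (cmod (h t - \<phi> t))\<^sup>2) \<and> l2_normsq (\<lambda>t. h t - \<phi> t) < e"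
proof -
  have e4: "e / 4 > 0" using e by simp
  obtain J where int1: "integrable lborel (\<lambda>t. (cmod (h t - complex_of_real (rho c d J t) * clip (real J) (h t)))\<^sup>2)"
    and n1: "l2_normsq (\<lambda>t. h t - complex_of_real (rho c d J t) * clip (real J) (h t)) < e / 4"
    using density_stage1[OF h supp e4] by blast
  define q where "q = (\<lambda>t. complex_of_real (rho c d J t) * clip (real J) (h t))"
  have hm[measurable]: "h \<in> borel_measurable borel" using L2_meas[OF h] by simp
  have hleb: "h \<in> borel_measurable lebesgue"
    using L2_meas[OF h] by (rule measurable_completion)
  have "h measurable_on UNIV"
    using lebesgue_measurable_imp_measurable_on[OF hleb, of UNIV] by simp
  then obtain N g where N: "negligible N" and gc: "\<And>n. continuous_on UNIV (g n)"
    and gl: "\<And>x. x \<notin> N \<Longrightarrow> (\<lambda>n. g n x) \<longlonglongrightarrow> h x"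
    unfolding measurable_on_def by auto
  have gm[measurable]: "g n \<in> borel_measurable borel" for n
    using gc by (rule borel_measurable_continuous_onI)
  define r where "r = (\<lambda>n t. complex_of_real (rho c d J t) * clip (real J) (g n t))"
  define s where "s = (\<lambda>n t. (cmod (q t - r n t))\<^sup>2)"
  have sm: "s n \<in> borel_measurable lborel" for n
    unfolding s_def q_def r_def by measurable
  define w where "w = (\<lambda>t. 16 * (real J)\<^sup>2 * indicator {c..d} t :: real)"
  have w: "integrable lborel w"
  proof -
    have "integrable lborel (indicator {c..d} :: real \<Rightarrow> real)"
      by (rule integrable_real_indicator) (auto simp: emeasure_lborel_Icc_eq)
    then show ?thesis unfolding w_def by simp
  qed
  have lim: "AE t in lborel. (\<lambda>n. s n t) \<longlonglongrightarrow> 0"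
    using AE_not_negligible[OF N]
  proof eventually_elim
    case (elim x)
    have "isCont (clip (real J)) (h x)"
      using clip_cont continuous_on_eq_continuous_at by blast
    then have "(\<lambda>n. clip (real J) (g n x)) \<longlonglongrightarrow> clip (real J) (h x)"
      using gl[OF elim] by (rule isCont_tendsto_compose)
    then have "(\<lambda>n. r n x) \<longlonglongrightarrow> q x"
      unfolding r_def q_def by (intro tendsto_intros)
    then have "(\<lambda>n. (cmod (q x - r n x))\<^sup>2) \<longlonglongrightarrow> (cmod (q x - q x))\<^sup>2"
      by (intro tendsto_intros)
    then show ?case by (simp add: s_def)
  qed
  have bound: "AE t in lborel. norm (s n t) \<le> w t" for n
  proof (rule AE_I2)
    fix t
    show "norm (s n t) \<le> w t"
    proof (cases "t \<in> {c<..<d}")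
      case False
      then show ?thesis by (simp add: s_def q_def r_def w_def rho_out)
    next
      case True
      have "cmod (q t - r n t) = rho c d J t * cmod (clip (real J) (h t) - clip (real J) (g n t))"
        unfolding q_def r_def using rho_nonneg[of c d J t]
        by (simp add: right_diff_distrib[symmetric] norm_mult)
      also have "\<dots> \<le> 1 * (2 * real J + 2 * real J)"
      proof (rule mult_mono)
        show "cmod (clip (real J) (h t) - clip (real J) (g n t)) \<le> 2 * real J + 2 * real J"
          using norm_triangle_ineq4[of "clip (real J) (h t)" "clip (real J) (g n t)"]
            norm_clip_bound[of "real J" "h t"] norm_clip_bound[of "real J" "g n t"] by simp
      qed (use rho_le1 in auto)
      finally have "cmod (q t - r n t) \<le> 4 * real J" by simp
      then have "(cmod (q t - r n t))\<^sup>2 \<le> (4 * real J)\<^sup>2" by (intro power_mono) auto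
      then show ?thesis using True by (simp add: s_def w_def power_mult_distrib)
    qed
  qed
  have conv: "(\<lambda>n. integral\<^sup>L lborel (s n)) \<longlonglongrightarrow> integral\<^sup>L lborel (\<lambda>t. 0::real)"
    using Bochner_Integration.integral_dominated_convergence[OF _ sm w lim bound] by simp
  have ints: "integrable lborel (s n)" for n
    using Bochner_Integration.integrable_dominated_convergence2[OF _ sm w lim bound] by simp
  have conv0: "(\<lambda>n. integral\<^sup>L lborel (s n)) \<longlonglongrightarrow> 0" using conv by simp
  have "eventually (\<lambda>n. integral\<^sup>L lborel (s n) < e / 4) sequentially"
    by (rule order_tendstoD(2)[OF conv0 e4])
  then obtain n where n2: "integral\<^sup>L lborel (s n) < e / 4" by (auto simp: eventually_sequentially)
  show ?thesis
  proof (intro exI conjI allI impI)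
    show "continuous_on UNIV (r n)"
      unfolding r_def
      by (intro continuous_intros rho_cont continuous_on_compose2[OF clip_cont gc]) auto
    show "r n t = 0" if "t \<notin> {c<..<d}" for t
      using that by (simp add: r_def rho_out)
    have int1': "integrable lborel (\<lambda>t. (cmod (h t - q t))\<^sup>2)" using int1 unfolding q_def .
    have intsum: "integrable lborel (\<lambda>t. 2 * (cmod (h t - q t))\<^sup>2 + 2 * s n t)"
      using int1' ints[of n] by simp
    have le: "(cmod (h t - r n t))\<^sup>2 \<le> 2 * (cmod (h t - q t))\<^sup>2 + 2 * s n t" for t
      unfolding s_def by (rule sq_diff_le)
    have intr: "integrable lborel (\<lambda>t. (cmod (h t - r n t))\<^sup>2)"
    proof (rule Bochner_Integration.integrable_bound[OF intsum])
      show "(\<lambda>t. (cmod (h t - r n t))\<^sup>2) \<in> borel_measurable lborel" unfolding r_def by measurable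
      show "AE x in lborel. norm ((cmod (h x - r n x))\<^sup>2) \<le> norm (2 * (cmod (h x - q x))\<^sup>2 + 2 * s n x)"
        using le by (auto simp: s_def)
    qed
    have "l2_normsq (\<lambda>t. h t - r n t) \<le> integral\<^sup>L lborel (\<lambda>t. 2 * (cmod (h t - q t))\<^sup>2 + 2 * s n t)"
      unfolding l2_normsq_def using intr intsum le by (rule integral_mono)
    also have "\<dots> = 2 * l2_normsq (\<lambda>t. h t - q t) + 2 * integral\<^sup>L lborel (s n)"
      unfolding l2_normsq_def using int1' ints[of n] by simp
    also have "\<dots> < e" using n1 n2 unfolding q_def by simp
    finally show "l2_normsq (\<lambda>t. h t - r n t) < e" .
    show "integrable lborel (\<lambda>t. (cmod (h t - r n t))\<^sup>2)" by (rule intr)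
  qed
qed

lemma has_sum_nonneg_approx:
  fixes f :: "'a \<Rightarrow> real"
  assumes nonneg: "\<And>x. x \<in> A \<Longrightarrow> f x \<ge> 0"
    and up: "\<And>F. finite F \<Longrightarrow> F \<subseteq> A \<Longrightarrow> sum f F \<le> S"
    and low: "\<And>e. e > 0 \<Longrightarrow> \<exists>F. finite F \<and> F \<subseteq> A \<and> S - e < sum f F"
  shows "(f has_sum S) A"
  unfolding has_sum_def
proof (rule order_tendstoI)
  fix a assume "a < S"
  then obtain F0 where F0: "finite F0" "F0 \<subseteq> A" "S - (S - a) < sum f F0"
    using low[of "S - a"] by auto
  show "eventually (\<lambda>F. a < sum f F) (finite_subsets_at_top A)"
    unfolding eventually_finite_subsets_at_top
  proof (intro exI conjI allI impI)
    fix Y assume Y: "finite Y \<and> F0 \<subseteq> Y \<and> Y \<subseteq> A"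
    have "sum f F0 \<le> sum f Y" using Y nonneg by (intro sum_mono2) auto
    then show "a < sum f Y" using F0 by simp
  qed (use F0 in auto)
next
  fix a assume "S < a"
  show "eventually (\<lambda>F. sum f F < a) (finite_subsets_at_top A)"
    unfolding eventually_finite_subsets_at_top
  proof (intro exI conjI allI impI)
    fix Y assume Y: "finite Y \<and> {} \<subseteq> Y \<and> Y \<subseteq> A"
    then show "sum f Y < a" using up[of Y] \<open>S < a\<close> by simp
  qed auto
qed

lemma parseval:
  assumes b: "b > 0" and h: "h \<in> L2" and supp: "\<And>t. t \<notin> {c..<c+1/b} \<Longrightarrow> h t = 0"
  shows "((\<lambda>m. (cmod (l2_inner h (u b c m)))\<^sup>2) has_sum l2_normsq h) UNIV"
proof (rule has_sum_nonneg_approx)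
  define cf where "cf = (\<lambda>m. l2_inner h (u b c m))"
  have uL: "\<And>m. u b c m \<in> L2" using b by (rule u_L2)
  have orth: "\<And>m k. l2_inner (u b c m) (u b c k) = (if m = k then 1 else 0)" using b by (rule u_orth)
  have proj: "l2_normsq (\<lambda>x. h x - (\<Sum>m\<in>F. d m * u b c m x)) =
     l2_normsq h - (\<Sum>m\<in>F. (cmod (cf m))\<^sup>2) + (\<Sum>m\<in>F. (cmod (cf m - d m))\<^sup>2)" if "finite F" for F d
    unfolding cf_def using projection_identity[OF h that uL orth] by simp
  show "sum (\<lambda>m. (cmod (l2_inner h (u b c m)))\<^sup>2) F \<le> l2_normsq h" if F: "finite F" "F \<subseteq> UNIV" for F
    using proj[OF F(1), of cf] l2_normsq_nonneg[of "\<lambda>x. h x - (\<Sum>m\<in>F. cf m * u b c m x)"]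
    unfolding cf_def by simp
  fix e :: real assume e: "e > 0"
  obtain \<phi> where \<phi>c: "continuous_on UNIV \<phi>" and \<phi>0: "\<And>t. t \<notin> {c<..<c+1/b} \<Longrightarrow> \<phi> t = 0"
    and \<phi>i: "integrable lborel (\<lambda>t. (cmod (h t - \<phi> t))\<^sup>2)" and \<phi>n: "l2_normsq (\<lambda>t. h t - \<phi> t) < e / 4"
    using density[where h=h and c=c and d="c+1/b" and e="e/4", OF h supp] e by auto
  define \<eta> where "\<eta> = sqrt (b * e / 8)"
  have \<eta>: "\<eta> > 0" using b e by (simp add: \<eta>_def)
  have \<eta>2: "\<eta>\<^sup>2 / b = e / 8" using b e by (simp add: \<eta>_def)
  have ends: "\<phi> c = \<phi> (c + 1/b)" using \<phi>0[of c] \<phi>0[of "c + 1/b"] by simp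
  obtain F d where F: "finite F" and app: "\<And>t. t \<in> {c..c+1/b} \<Longrightarrow> cmod (\<phi> t - (\<Sum>m\<in>F. d m * E b m t)) < \<eta>"
    using trig_approx[OF b continuous_on_subset[OF \<phi>c] ends \<eta>] by blast
  define d' where "d' = (\<lambda>m. d m / complex_of_real (sqrt b))"
  define p where "p = (\<lambda>t. \<Sum>m\<in>F. d' m * u b c m t)"
  have p_eq: "p t = (\<Sum>m\<in>F. d m * E b m t) * complex_of_real (indicator {c..<c+1/b} t)" for t
    unfolding p_def d'_def u_def using b by (simp add: sum_distrib_right mult.assoc)
  have pL: "p \<in> L2" unfolding p_def using F uL by (intro L2_sum L2_scale) auto
  have hpL: "(\<lambda>t. h t - p t) \<in> L2" using h pL by (rule L2_diff)
  have ind_int: "integrable lborel (\<lambda>t. \<eta>\<^sup>2 * indicator {c..<c+1/b} t :: real)"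
  proof -
    have "integrable lborel (indicator {c..<c+1/b} :: real \<Rightarrow> real)"
      by (rule integrable_real_indicator) (use b in auto)
    then show ?thesis by simp
  qed
  have pw: "(cmod (\<phi> t - p t))\<^sup>2 \<le> \<eta>\<^sup>2 * indicator {c..<c+1/b} t" for t
  proof (cases "t \<in> {c..<c+1/b}")
    case True
    then have "cmod (\<phi> t - p t) < \<eta>" using app[of t] by (simp add: p_eq)
    then have "(cmod (\<phi> t - p t))\<^sup>2 \<le> \<eta>\<^sup>2" by (intro power_mono) auto
    then show ?thesis using True by simp
  next
    case False
    then have "\<phi> t = 0" using \<phi>0[of t] by auto
    then show ?thesis using False by (simp add: p_eq)
  qed
  have \<phi>m[measurable]: "\<phi> \<in> borel_measurable borel" using \<phi>c by (rule borel_measurable_continuous_onI)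
  have pm[measurable]: "p \<in> borel_measurable borel" using L2_meas[OF pL] by simp
  have hm[measurable]: "h \<in> borel_measurable borel" using L2_meas[OF h] by simp
  have int2: "integrable lborel (\<lambda>t. (cmod (\<phi> t - p t))\<^sup>2)"
  proof (rule Bochner_Integration.integrable_bound[OF ind_int])
    show "(\<lambda>t. (cmod (\<phi> t - p t))\<^sup>2) \<in> borel_measurable lborel" by measurable
    show "AE x in lborel. norm ((cmod (\<phi> x - p x))\<^sup>2) \<le> norm (\<eta>\<^sup>2 * indicator {c..<c + 1 / b} x :: real)"
      using pw by (auto simp: abs_mult)
  qed
  have n2: "l2_normsq (\<lambda>t. \<phi> t - p t) \<le> e / 8"
  proof -
    have "l2_normsq (\<lambda>t. \<phi> t - p t) \<le> integral\<^sup>L lborel (\<lambda>t. \<eta>\<^sup>2 * indicator {c..<c+1/b} t :: real)"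
      unfolding l2_normsq_def using int2 ind_int pw by (rule integral_mono)
    also have "\<dots> = \<eta>\<^sup>2 / b" using b by simp
    finally show ?thesis using \<eta>2 by simp
  qed
  have intsum: "integrable lborel (\<lambda>t. 2 * (cmod (h t - \<phi> t))\<^sup>2 + 2 * (cmod (\<phi> t - p t))\<^sup>2)"
    using \<phi>i int2 by simp
  have "l2_normsq (\<lambda>t. h t - p t) \<le> integral\<^sup>L lborel (\<lambda>t. 2 * (cmod (h t - \<phi> t))\<^sup>2 + 2 * (cmod (\<phi> t - p t))\<^sup>2)"
    unfolding l2_normsq_def using L2_int[OF hpL] intsum sq_diff_le by (rule integral_mono)
  also have "\<dots> = 2 * l2_normsq (\<lambda>t. h t - \<phi> t) + 2 * l2_normsq (\<lambda>t. \<phi> t - p t)"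
    unfolding l2_normsq_def using \<phi>i int2 by simp
  also have "\<dots> < e" using \<phi>n n2 e by linarith
  finally have lt: "l2_normsq (\<lambda>t. h t - p t) < e" .
  have "l2_normsq h - (\<Sum>m\<in>F. (cmod (cf m))\<^sup>2) \<le> l2_normsq (\<lambda>t. h t - p t)"
    using proj[OF F, of d'] unfolding p_def by (simp add: sum_nonneg)
  then show "\<exists>F. finite F \<and> F \<subseteq> UNIV \<and> l2_normsq h - e < sum (\<lambda>m. (cmod (l2_inner h (u b c m)))\<^sup>2) F"
    using lt F unfolding cf_def by (intro exI[of _ F]) auto
qed (simp)

lemma filterlim_int_intervals:
  "filterlim (\<lambda>N::nat. {- int N..int N}) (finite_subsets_at_top (UNIV :: int set)) sequentially"
  unfolding filterlim_finite_subsets_at_top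
proof (safe, goal_cases)
  case (1 X)
  define M where "M = Max (abs ` X)"
  have M: "\<bar>x\<bar> \<le> M" if "x \<in> X" for x
    unfolding M_def using 1 that by (intro Max_ge) auto
  show ?case
  proof (rule eventually_sequentiallyI[of "nat M"])
    fix N assume "nat M \<le> N"
    then show "finite {- int N..int N} \<and> X \<subseteq> {- int N..int N} \<and> {- int N..int N} \<subseteq> UNIV"
      using M by fastforce
  qed
qed

lemma has_sum_integral_int:
  fixes g :: "int \<Rightarrow> real \<Rightarrow> real"
  assumes meas: "\<And>n. g n \<in> borel_measurable lborel" and nonneg: "\<And>n t. g n t \<ge> 0"
    and hs: "\<And>t. ((\<lambda>n. g n t) has_sum w t) UNIV" and intw: "integrable lborel w"
  shows "((\<lambda>n. integral\<^sup>L lborel (g n)) has_sum integral\<^sup>L lborel w) UNIV"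
proof (rule has_sum_nonneg_approx)
  have wm: "w \<in> borel_measurable lborel" using intw by auto
  have sum_le: "(\<Sum>n\<in>F. g n t) \<le> w t" if "finite F" for F t
    using has_sum_mono2[OF has_sum_finite[OF that] hs[of t]] nonneg by auto
  have gint: "integrable lborel (g n)" for n
  proof (rule Bochner_Integration.integrable_bound[OF intw meas])
    show "AE x in lborel. norm (g n x) \<le> norm (w x)"
    proof (rule AE_I2)
      fix x
      have "g n x \<le> w x" using sum_le[of "{n}" x] by simp
      then show "norm (g n x) \<le> norm (w x)" using nonneg[of n x] by simp
    qed
  qed
  have sumint: "integral\<^sup>L lborel (\<lambda>t. \<Sum>n\<in>F. g n t) = (\<Sum>n\<in>F. integral\<^sup>L lborel (g n))" for F
    using gint by (simp add: integral_sum)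
  show "integral\<^sup>L lborel (g n) \<ge> 0" for n using nonneg by simp
  show "sum (\<lambda>n. integral\<^sup>L lborel (g n)) F \<le> integral\<^sup>L lborel w" if "finite F" "F \<subseteq> UNIV" for F
  proof -
    have "integral\<^sup>L lborel (\<lambda>t. \<Sum>n\<in>F. g n t) \<le> integral\<^sup>L lborel w"
      using gint intw sum_le[OF that(1)] by (intro integral_mono) auto
    then show ?thesis using sumint by simp
  qed
  fix e :: real assume e: "e > 0"
  define S where "S = (\<lambda>(N::nat) t. \<Sum>n\<in>{- int N..int N}. g n t)"
  have Sm: "S N \<in> borel_measurable lborel" for N unfolding S_def using meas by auto
  have lim: "AE t in lborel. (\<lambda>N. S N t) \<longlonglongrightarrow> w t"
  proof (rule AE_I2)
    fix t
    have "(sum (\<lambda>n. g n t) \<longlongrightarrow> w t) (finite_subsets_at_top UNIV)"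
      using hs[of t] unfolding has_sum_def .
    from filterlim_compose[OF this filterlim_int_intervals]
    show "(\<lambda>N. S N t) \<longlonglongrightarrow> w t" unfolding S_def by simp
  qed
  have bound: "AE t in lborel. norm (S N t) \<le> w t" for N
  proof (rule AE_I2)
    fix t
    have "0 \<le> S N t" unfolding S_def using nonneg by (intro sum_nonneg) auto
    moreover have "S N t \<le> w t" unfolding S_def by (rule sum_le) simp
    ultimately show "norm (S N t) \<le> w t" by simp
  qed
  have "(\<lambda>N. integral\<^sup>L lborel (S N)) \<longlonglongrightarrow> integral\<^sup>L lborel w"
    using Bochner_Integration.integral_dominated_convergence[OF wm Sm intw lim bound] .
  then have "eventually (\<lambda>N. integral\<^sup>L lborel w - e < integral\<^sup>L lborel (S N)) sequentially"
    using e by (intro order_tendstoD(1)) auto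
  then obtain N where "integral\<^sup>L lborel w - e < integral\<^sup>L lborel (S N)"
    by (auto simp: eventually_sequentially)
  then show "\<exists>F. finite F \<and> F \<subseteq> UNIV \<and> integral\<^sup>L lborel w - e < sum (\<lambda>n. integral\<^sup>L lborel (g n)) F"
    unfolding S_def sumint by (intro exI[of _ "{- int N..int N}"]) auto
qed

definition Wt :: "real \<Rightarrow> (real \<Rightarrow> complex) \<Rightarrow> real \<Rightarrow> real" where
  "Wt a \<phi> t = (cmod (\<phi> (t - of_int \<lfloor>t / a\<rfloor> * a)))\<^sup>2 + (cmod (\<phi> (t - of_int \<lfloor>t / a\<rfloor> * a + a)))\<^sup>2"

locale window =
  fixes a b :: real and \<phi> :: "real \<Rightarrow> complex" and B :: real
  assumes a: "a > 0" and b: "b > 0" and ab1: "a \<le> 1/b" and ab2: "1/b \<le> 2 * a"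
    and meas[measurable]: "\<phi> \<in> borel_measurable borel"
    and bnd: "\<And>x. cmod (\<phi> x) \<le> B"
    and real: "\<And>x. cnj (\<phi> x) = \<phi> x"
    and supp: "\<And>x. \<phi> x \<noteq> 0 \<Longrightarrow> 0 \<le> x \<and> x < 1/b"
begin

lemma supp_terms:
  assumes n: "n \<notin> {\<lfloor>t / a\<rfloor> - 1, \<lfloor>t / a\<rfloor>}"
  shows "\<phi> (t - of_int n * a) = 0"
proof (rule ccontr)
  assume "\<phi> (t - of_int n * a) \<noteq> 0"
  from supp[OF this] have h: "0 \<le> t - of_int n * a" "t - of_int n * a < 1/b" by auto
  define k where "k = \<lfloor>t / a\<rfloor>"
  have k1: "of_int k * a \<le> t" using a unfolding k_def
    by (metis floor_divide_lower)
  have k2: "t < (of_int k + 1) * a" using a unfolding k_def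
    by (metis floor_divide_upper)
  have "of_int n * a < (of_int k + 1) * a" using h k2 by linarith
  then have "of_int n < (of_int k + 1 :: real)" using a by simp
  then have n1: "n \<le> k" by linarith
  have "t < (of_int n + 2) * a" using h ab2 by (simp add: algebra_simps)
  then have "of_int k * a < (of_int n + 2) * a" using k1 by linarith
  then have "of_int k < (of_int n + 2 :: real)" using a by simp
  then have n2: "k - 1 \<le> n" by linarith
  from n1 n2 n show False unfolding k_def by auto
qed

lemma window_has_sum:
  "((\<lambda>n. (cmod (\<phi> (t - of_int n * a)))\<^sup>2) has_sum Wt a \<phi> t) UNIV"
proof (rule has_sum_finite_neutralI[of "{\<lfloor>t / a\<rfloor> - 1, \<lfloor>t / a\<rfloor>}"])
  show "(cmod (\<phi> (t - of_int n * a)))\<^sup>2 = 0" if "n \<in> UNIV - {\<lfloor>t / a\<rfloor> - 1, \<lfloor>t / a\<rfloor>}" for n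
    using supp_terms[of n t] that by simp
  show "Wt a \<phi> t = (\<Sum>n\<in>{\<lfloor>t / a\<rfloor> - 1, \<lfloor>t / a\<rfloor>}. (cmod (\<phi> (t - of_int n * a)))\<^sup>2)"
    unfolding Wt_def by (simp add: algebra_simps)
qed auto

lemma Wt_meas[measurable]: "Wt a \<phi> \<in> borel_measurable borel"
  unfolding Wt_def by measurable

lemma Wt_nonneg: "0 \<le> Wt a \<phi> t" unfolding Wt_def by simp

lemma Wt_bound: "Wt a \<phi> t \<le> 2 * B\<^sup>2"
proof -
  have "\<And>x. (cmod (\<phi> x))\<^sup>2 \<le> B\<^sup>2" using bnd by (intro power_mono) auto
  then have "(cmod (\<phi> (t - of_int \<lfloor>t / a\<rfloor> * a)))\<^sup>2 \<le> B\<^sup>2" "(cmod (\<phi> (t - of_int \<lfloor>t / a\<rfloor> * a + a)))\<^sup>2 \<le> B\<^sup>2"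
    by blast+
  then show ?thesis unfolding Wt_def by linarith
qed

lemma coef_eq:
  "l2_inner f (modul (of_int m * b) (transl (of_int n * a) (\<lambda>t. complex_of_real (sqrt b) * \<phi> t)))
   = l2_inner (\<lambda>t. f t * \<phi> (t - of_int n * a)) (u b (of_int n * a) m)"
  unfolding l2_inner_def
proof (intro Bochner_Integration.integral_cong refl)
  fix t
  show "f t * cnj (modul (of_int m * b) (transl (of_int n * a) (\<lambda>t. complex_of_real (sqrt b) * \<phi> t)) t) =
        f t * \<phi> (t - of_int n * a) * cnj (u b (of_int n * a) m t)"
  proof (cases "\<phi> (t - of_int n * a) = 0")
    case True then show ?thesis by (simp add: modul_def transl_def)
  next
    case False
    from supp[OF False] have "t \<in> {of_int n * a..<of_int n * a + 1/b}" by auto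
    then have u1: "u b (of_int n * a) m t = complex_of_real (sqrt b) * E b m t" by (simp add: u_def)
    have m1: "modul (of_int m * b) (transl (of_int n * a) (\<lambda>t. complex_of_real (sqrt b) * \<phi> t)) t
       = E b m t * (complex_of_real (sqrt b) * \<phi> (t - of_int n * a))"
      by (simp add: modul_def transl_def E_def)
    show ?thesis unfolding u1 m1 using real[of "t - of_int n * a"] by (simp add: mult_ac)
  qed
qed

lemma shifted_L2:
  assumes f: "f \<in> L2" shows "(\<lambda>t. f t * \<phi> (t - c)) \<in> L2"
proof -
  have "(\<lambda>t. \<phi> (t - c) * f t) \<in> L2"
    by (rule L2_mult_bounded[OF f _ bnd]) measurable
  then show ?thesis by (simp add: mult.commute)
qed

lemma frame_sum:
  assumes f: "f \<in> L2"
  shows "((\<lambda>(m::int, n::int). (cmod (l2_inner f (modul (of_int m * b) (transl (of_int n * a) (\<lambda>t. complex_of_real (sqrt b) * \<phi> t)))))\<^sup>2)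
          has_sum (LINT t|lborel. (cmod (f t))\<^sup>2 * Wt a \<phi> t)) UNIV"
proof -
  define G where "G = (\<lambda>(n::int, m::int). (cmod (l2_inner f (modul (of_int m * b) (transl (of_int n * a) (\<lambda>t. complex_of_real (sqrt b) * \<phi> t)))))\<^sup>2)"
  define g where "g = (\<lambda>(n::int) t. (cmod (f t))\<^sup>2 * (cmod (\<phi> (t - of_int n * a)))\<^sup>2)"
  have fm[measurable]: "f \<in> borel_measurable borel" using L2_meas[OF f] by simp
  have inner: "((\<lambda>m. G (n, m)) has_sum integral\<^sup>L lborel (g n)) UNIV" for n
  proof -
    have hL: "(\<lambda>t. f t * \<phi> (t - of_int n * a)) \<in> L2" using f by (rule shifted_L2)
    have hs: "f t * \<phi> (t - of_int n * a) = 0" if "t \<notin> {of_int n * a..<of_int n * a + 1/b}" for t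
      using supp[of "t - of_int n * a"] that by (cases "\<phi> (t - of_int n * a) = 0") auto
    have "((\<lambda>m. (cmod (l2_inner (\<lambda>t. f t * \<phi> (t - of_int n * a)) (u b (of_int n * a) m)))\<^sup>2)
            has_sum l2_normsq (\<lambda>t. f t * \<phi> (t - of_int n * a))) UNIV"
      using parseval[OF b hL hs] .
    moreover have "l2_normsq (\<lambda>t. f t * \<phi> (t - of_int n * a)) = integral\<^sup>L lborel (g n)"
      unfolding l2_normsq_def g_def by (simp add: norm_mult power_mult_distrib)
    ultimately show ?thesis unfolding G_def by (simp add: coef_eq)
  qed
  have intw: "integrable lborel (\<lambda>t. (cmod (f t))\<^sup>2 * Wt a \<phi> t)"
  proof (rule Bochner_Integration.integrable_bound)
    show "integrable lborel (\<lambda>t. 2 * B\<^sup>2 * (cmod (f t))\<^sup>2)" using L2_int[OF f] by simp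
    show "(\<lambda>t. (cmod (f t))\<^sup>2 * Wt a \<phi> t) \<in> borel_measurable lborel" by measurable
    show "AE x in lborel. norm ((cmod (f x))\<^sup>2 * Wt a \<phi> x) \<le> norm (2 * B\<^sup>2 * (cmod (f x))\<^sup>2)"
    proof (rule AE_I2)
      fix x
      have "(cmod (f x))\<^sup>2 * Wt a \<phi> x \<le> (cmod (f x))\<^sup>2 * (2 * B\<^sup>2)"
        using Wt_bound by (intro mult_left_mono) auto
      then show "norm ((cmod (f x))\<^sup>2 * Wt a \<phi> x) \<le> norm (2 * B\<^sup>2 * (cmod (f x))\<^sup>2)"
        using Wt_nonneg[of x] by (simp add: abs_mult mult_ac)
    qed
  qed
  have outer: "((\<lambda>n. integral\<^sup>L lborel (g n)) has_sum (LINT t|lborel. (cmod (f t))\<^sup>2 * Wt a \<phi> t)) UNIV"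
  proof (rule has_sum_integral_int[OF _ _ _ intw])
    show "g n \<in> borel_measurable lborel" for n unfolding g_def by measurable
    show "0 \<le> g n t" for n t unfolding g_def by simp
    show "((\<lambda>n. g n t) has_sum (cmod (f t))\<^sup>2 * Wt a \<phi> t) UNIV" for t
      unfolding g_def by (intro has_sum_cmult_right window_has_sum)
  qed
  have summ: "G summable_on Sigma UNIV (\<lambda>_. UNIV)"
    by (rule summable_on_SigmaI[OF inner]) (use outer in \<open>auto simp: G_def summable_on_def\<close>)
  have "(G has_sum (LINT t|lborel. (cmod (f t))\<^sup>2 * Wt a \<phi> t)) (Sigma UNIV (\<lambda>_. UNIV))"
    by (rule has_sum_SigmaI[OF inner outer summ])
  then have "(G has_sum (LINT t|lborel. (cmod (f t))\<^sup>2 * Wt a \<phi> t)) (UNIV \<times> UNIV)" by simp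
  then have "((\<lambda>(x, y). G (y, x)) has_sum (LINT t|lborel. (cmod (f t))\<^sup>2 * Wt a \<phi> t)) (UNIV \<times> UNIV)"
    by (subst (asm) has_sum_swap)
  then show ?thesis unfolding G_def by simp
qed

end

context window begin

lemma per_inner_term:
  "per_inner b f (transl (of_int k * a) \<phi>) t * transl (of_int k * a) \<phi> t
     = f t * \<phi> (t - of_int k * a) * \<phi> (t - of_int k * a)"
proof (cases "\<phi> (t - of_int k * a) = 0")
  case True then show ?thesis by (simp add: transl_def)
next
  case False
  from supp[OF False] have r: "0 \<le> t - of_int k * a" "t - of_int k * a < 1/b" by auto
  have zero: "f (t - of_int j / b) * cnj (transl (of_int k * a) \<phi> (t - of_int j / b)) = 0"
    if "j \<noteq> 0" for j
  proof (cases "\<phi> (t - of_int j / b - of_int k * a) = 0")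
    case True then show ?thesis by (simp add: transl_def)
  next
    case False2: False
    from supp[OF False2] have r2: "0 \<le> t - of_int j / b - of_int k * a" "t - of_int j / b - of_int k * a < 1/b" by auto
    have "of_int j / b < 1 / b" "- (1 / b) < of_int j / b" using r r2 by linarith+
    then have "of_int j < (1::real)" "- 1 < (of_int j :: real)" using b by (simp_all add: field_simps)
    then have "j = 0" by linarith
    with that show ?thesis by simp
  qed
  have "((\<lambda>j. f (t - of_int j / b) * cnj (transl (of_int k * a) \<phi> (t - of_int j / b))) has_sum
          f t * cnj (transl (of_int k * a) \<phi> t)) UNIV"
    by (rule has_sum_finite_neutralI[of "{0}"]) (use zero in auto)
  then have "per_inner b f (transl (of_int k * a) \<phi>) t = f t * cnj (transl (of_int k * a) \<phi> t)"
    unfolding per_inner_def by (rule infsumI)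
  then show ?thesis using real[of "t - of_int k * a"] by (simp add: transl_def)
qed

lemma sq_real: "\<phi> x * \<phi> x = complex_of_real ((cmod (\<phi> x))\<^sup>2)"
  using complex_norm_square[of "\<phi> x"] real[of x] by simp

lemma bracket_eq: "bracket_op a b \<phi> f t = f t * complex_of_real (Wt a \<phi> t)"
proof -
  have "((\<lambda>k. per_inner b f (transl (of_int k * a) \<phi>) t * transl (of_int k * a) \<phi> t) has_sum
          f t * complex_of_real (Wt a \<phi> t)) UNIV"
  proof (rule has_sum_finite_neutralI[of "{\<lfloor>t / a\<rfloor> - 1, \<lfloor>t / a\<rfloor>}"])
    show "per_inner b f (transl (of_int k * a) \<phi>) t * transl (of_int k * a) \<phi> t = 0"
      if "k \<in> UNIV - {\<lfloor>t / a\<rfloor> - 1, \<lfloor>t / a\<rfloor>}" for k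
      using supp_terms[of k t] that by (simp add: per_inner_term)
    have e1: "t - (of_int \<lfloor>t / a\<rfloor> - 1) * a = t - of_int \<lfloor>t / a\<rfloor> * a + a" by (simp add: algebra_simps)
    show "f t * complex_of_real (Wt a \<phi> t) =
      (\<Sum>k\<in>{\<lfloor>t / a\<rfloor> - 1, \<lfloor>t / a\<rfloor>}. per_inner b f (transl (of_int k * a) \<phi>) t * transl (of_int k * a) \<phi> t)"
      unfolding per_inner_term by (simp add: e1 Wt_def mult.assoc sq_real distrib_left)
  qed auto
  then show ?thesis unfolding bracket_op_def by (rule infsumI)
qed

lemma phi_L2: "\<phi> \<in> L2"
proof (rule L2_I)
  show "\<phi> \<in> borel_measurable lborel" by simp
  have "integrable lborel (\<lambda>t. B\<^sup>2 * indicator {0..<1/b} t :: real)"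
  proof -
    have "integrable lborel (indicator {0..<1/b} :: real \<Rightarrow> real)"
      by (rule integrable_real_indicator) (use b in auto)
    then show ?thesis by simp
  qed
  then show "integrable lborel (\<lambda>x. (cmod (\<phi> x))\<^sup>2)"
  proof (rule Bochner_Integration.integrable_bound)
    show "(\<lambda>x. (cmod (\<phi> x))\<^sup>2) \<in> borel_measurable lborel" by measurable
    show "AE x in lborel. norm ((cmod (\<phi> x))\<^sup>2) \<le> norm (B\<^sup>2 * indicator {0..<1 / b} x :: real)"
    proof (rule AE_I2)
      fix x
      show "norm ((cmod (\<phi> x))\<^sup>2) \<le> norm (B\<^sup>2 * indicator {0..<1 / b} x :: real)"
      proof (cases "\<phi> x = 0")
        case False
        then have "x \<in> {0..<1/b}" using supp[OF False] by auto
        moreover have "(cmod (\<phi> x))\<^sup>2 \<le> B\<^sup>2" using bnd[of x] by (intro power_mono) auto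
        ultimately show ?thesis by simp
      qed simp
    qed
  qed
qed

lemma g_L2: "(\<lambda>t. complex_of_real (sqrt b) * \<phi> t) \<in> L2"
  using phi_L2 by (rule L2_scale)

end

definition prof :: "real \<Rightarrow> real \<Rightarrow> real \<Rightarrow> real \<Rightarrow> real" where
  "prof a b c1 x = c1 * (indicator {0..<1/b - a} x + indicator {a..<1/b} x) + indicator {1/b - a..<a} x"

lemma gamma0_prof: "gamma0 a b = (\<lambda>x. complex_of_real (prof a b (1 / sqrt 2) x))"
  unfolding gamma0_def prof_def ind_def Let_def by (rule ext) simp

lemma psi0_prof: "psi0 a b = (\<lambda>x. complex_of_real (prof a b (1 / sqrt (2 * sqrt 2)) x))"
  unfolding psi0_def prof_def ind_def Let_def by (rule ext) simp

lemma beta0_eq: "beta0 a b = (\<lambda>x. complex_of_real (indicator {0..<1/b} x))"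
  unfolding beta0_def ind_def by simp

locale params =
  fixes a b :: real
  assumes a: "a > 0" and b: "b > 0" and ab1: "a \<le> 1/b" and ab2: "1/b \<le> 2 * a"
begin

lemma delta: "0 \<le> 1/b - a" "1/b - a \<le> a" using ab1 ab2 by auto

lemma prof_supp: assumes "prof a b c1 x \<noteq> 0" shows "0 \<le> x \<and> x < 1/b"
proof (rule ccontr)
  assume "\<not> (0 \<le> x \<and> x < 1/b)"
  then have "x \<notin> {0..<1/b - a}" "x \<notin> {a..<1/b}" "x \<notin> {1/b - a..<a}" using delta ab1 by auto
  then have "prof a b c1 x = 0" by (simp add: prof_def)
  with assms show False by simp
qed

lemma prof_bound: "\<bar>prof a b c1 x\<bar> \<le> 2 * \<bar>c1\<bar> + 1"
proof -
  have i: "\<And>S. 0 \<le> (indicator S x :: real) \<and> (indicator S x :: real) \<le> 1" by (simp add: indicator_def)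
  have s: "0 \<le> indicator {0..<1/b - a} x + (indicator {a..<1/b} x :: real)"
     "indicator {0..<1/b - a} x + (indicator {a..<1/b} x :: real) \<le> 2"
    using i[of "{0..<1/b - a}"] i[of "{a..<1/b}"] by linarith+
  have "\<bar>c1 * (indicator {0..<1/b - a} x + indicator {a..<1/b} x)\<bar> \<le> \<bar>c1\<bar> * 2"
    unfolding abs_mult using s by (intro mult_left_mono) auto
  moreover have "\<bar>indicator {1/b - a..<a} x :: real\<bar> \<le> 1" by (simp add: indicator_def)
  ultimately show ?thesis unfolding prof_def
    using abs_triangle_ineq[of "c1 * (indicator {0..<1/b - a} x + indicator {a..<1/b} x)" "indicator {1/b - a..<a} x"]
    by linarith
qed

lemma window_prof: "window a b (\<lambda>x. complex_of_real (prof a b c1 x)) (2 * \<bar>c1\<bar> + 1)"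
proof
  show "(\<lambda>x. complex_of_real (prof a b c1 x)) \<in> borel_measurable borel"
    unfolding prof_def by measurable
  show "cmod (complex_of_real (prof a b c1 x)) \<le> 2 * \<bar>c1\<bar> + 1" for x using prof_bound by simp
  show "cnj (complex_of_real (prof a b c1 x)) = complex_of_real (prof a b c1 x)" for x by simp
  show "complex_of_real (prof a b c1 x) \<noteq> 0 \<Longrightarrow> 0 \<le> x \<and> x < 1 / b" for x using prof_supp by simp
qed (use a b ab1 ab2 in auto)

lemma window_beta: "window a b (beta0 a b) 1"
  unfolding beta0_eq
proof
  show "(\<lambda>x. complex_of_real (indicator {0..<1/b} x)) \<in> borel_measurable borel" by measurable
  show "cmod (complex_of_real (indicator {0..<1/b} x)) \<le> 1" for x by (simp add: indicator_def)
qed (use a b ab1 ab2 in \<open>auto simp: indicator_def split: if_splits\<close>)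

lemma floor_at: assumes "0 \<le> r" "r < a" shows "\<lfloor>(of_int k * a + r) / a\<rfloor> = k"
proof -
  have "(of_int k * a + r) / a = of_int k + r / a" using a by (simp add: field_simps)
  moreover have "0 \<le> r / a" "r / a < 1" using assms a by auto
  ultimately show ?thesis by (intro floor_unique) auto
qed

lemma Wt_at:
  assumes "0 \<le> r" "r < a"
  shows "Wt a \<phi> (of_int k * a + r) = (cmod (\<phi> r))\<^sup>2 + (cmod (\<phi> (r + a)))\<^sup>2"
  unfolding Wt_def floor_at[OF assms] by simp

lemma decomp: obtains k r where "t = of_int k * a + r" "0 \<le> r" "r < a"
proof -
  have "of_int \<lfloor>t / a\<rfloor> * a \<le> t" using a by (metis floor_divide_lower)
  moreover have "t < (of_int \<lfloor>t / a\<rfloor> + 1) * a" using a by (metis floor_divide_upper)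
  ultimately show ?thesis using that[of "\<lfloor>t / a\<rfloor>" "t - of_int \<lfloor>t / a\<rfloor> * a"]
    by (simp add: algebra_simps)
qed

lemma prof_at:
  assumes "0 \<le> r" "r < a"
  shows "prof a b c1 r = (if r < 1/b - a then c1 else 1)"
    and "prof a b c1 (r + a) = (if r < 1/b - a then c1 else 0)"
  using assms delta by (auto simp: prof_def indicator_def)

lemma Wt_prof:
  assumes "0 \<le> r" "r < a"
  shows "Wt a (\<lambda>x. complex_of_real (prof a b c1 x)) (of_int k * a + r) = (if r < 1/b - a then 2 * c1\<^sup>2 else 1)"
  unfolding Wt_at[OF assms] using prof_at[OF assms, of c1] by (simp add: power2_eq_square)

lemma Wt_beta:
  assumes "0 \<le> r" "r < a"
  shows "Wt a (beta0 a b) (of_int k * a + r) = (if r < 1/b - a then 2 else 1)"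
  unfolding Wt_at[OF assms] beta0_eq using assms delta by (auto simp: indicator_def)

lemma c_gamma: "2 * (1 / sqrt 2)\<^sup>2 = (1::real)"
  by (simp add: power_divide)

lemma c_psi: "2 * (1 / sqrt (2 * sqrt 2))\<^sup>2 = 1 / sqrt (2::real)"
proof -
  have "(1 / sqrt (2 * sqrt 2))\<^sup>2 = 1 / (2 * sqrt (2::real))" by (simp add: power_divide)
  moreover have "2 * (1 / (2 * sqrt (2::real))) = 1 / sqrt 2" by simp
  ultimately show ?thesis by simp
qed

end

context window begin

lemma WH_from_window:
  assumes A: "0 < A" "A \<le> C" and lo: "\<And>t. A \<le> Wt a \<phi> t" and hi: "\<And>t. Wt a \<phi> t \<le> C"
  shows "WH_frame_bounds (\<lambda>t. complex_of_real (sqrt b) * \<phi> t) a b A C"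
  unfolding WH_frame_bounds_def
proof (intro conjI ballI g_L2 A)
  fix f assume f: "f \<in> L2"
  note hs = frame_sum[OF f]
  then show "(\<lambda>(m::int, n::int). (cmod (l2_inner f (modul (of_int m * b) (transl (of_int n * a) (\<lambda>t. complex_of_real (sqrt b) * \<phi> t)))))\<^sup>2) summable_on UNIV"
    unfolding summable_on_def by blast
  have eq: "(\<Sum>\<^sub>\<infinity>(m::int, n::int) \<in> UNIV. (cmod (l2_inner f (modul (of_int m * b) (transl (of_int n * a) (\<lambda>t. complex_of_real (sqrt b) * \<phi> t)))))\<^sup>2)
      = (LINT t|lborel. (cmod (f t))\<^sup>2 * Wt a \<phi> t)"
    using hs by (rule infsumI)
  have fm[measurable]: "f \<in> borel_measurable borel" using L2_meas[OF f] by simp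
  have i1: "integrable lborel (\<lambda>t. (cmod (f t))\<^sup>2)" using L2_int[OF f] .
  have i2: "integrable lborel (\<lambda>t. (cmod (f t))\<^sup>2 * Wt a \<phi> t)"
  proof (rule Bochner_Integration.integrable_bound)
    show "integrable lborel (\<lambda>t. C * (cmod (f t))\<^sup>2)" using i1 by simp
    show "(\<lambda>t. (cmod (f t))\<^sup>2 * Wt a \<phi> t) \<in> borel_measurable lborel" by measurable
    show "AE x in lborel. norm ((cmod (f x))\<^sup>2 * Wt a \<phi> x) \<le> norm (C * (cmod (f x))\<^sup>2)"
    proof (rule AE_I2)
      fix x
      have "(cmod (f x))\<^sup>2 * Wt a \<phi> x \<le> (cmod (f x))\<^sup>2 * C" using hi by (intro mult_left_mono) auto
      moreover have "C * (cmod (f x))\<^sup>2 \<le> \<bar>C\<bar> * (cmod (f x))\<^sup>2" by (intro mult_right_mono) auto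
      ultimately show "norm ((cmod (f x))\<^sup>2 * Wt a \<phi> x) \<le> norm (C * (cmod (f x))\<^sup>2)"
        using Wt_nonneg[of x] by (simp add: abs_mult mult_ac)
    qed
  qed
  have "A * l2_normsq f = (LINT t|lborel. A * (cmod (f t))\<^sup>2)" unfolding l2_normsq_def by simp
  also have "\<dots> \<le> (LINT t|lborel. (cmod (f t))\<^sup>2 * Wt a \<phi> t)"
    using i1 i2 by (intro integral_mono) (auto simp: mult.commute intro: mult_right_mono lo)
  finally show "A * l2_normsq f \<le> (\<Sum>\<^sub>\<infinity>(m::int, n::int) \<in> UNIV. (cmod (l2_inner f (modul (of_int m * b) (transl (of_int n * a) (\<lambda>t. complex_of_real (sqrt b) * \<phi> t)))))\<^sup>2)"
    unfolding eq .
  have "(LINT t|lborel. (cmod (f t))\<^sup>2 * Wt a \<phi> t) \<le> (LINT t|lborel. C * (cmod (f t))\<^sup>2)"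
    using i1 i2 by (intro integral_mono) (auto simp: mult.commute intro: mult_right_mono hi)
  also have "\<dots> = C * l2_normsq f" unfolding l2_normsq_def by simp
  finally show "(\<Sum>\<^sub>\<infinity>(m::int, n::int) \<in> UNIV. (cmod (l2_inner f (modul (of_int m * b) (transl (of_int n * a) (\<lambda>t. complex_of_real (sqrt b) * \<phi> t)))))\<^sup>2) \<le> C * l2_normsq f"
    unfolding eq .
qed

lemma bracket_L2:
  assumes f: "f \<in> L2" shows "bracket_op a b \<phi> f \<in> L2"
proof -
  have "(\<lambda>t. complex_of_real (Wt a \<phi> t) * f t) \<in> L2"
    by (rule L2_mult_bounded[OF f _, where B="2 * B\<^sup>2"]) (use Wt_bound Wt_nonneg in auto)
  then show ?thesis by (simp add: bracket_eq[abs_def] mult.commute)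
qed

end

theorem mainTheorem14:
  fixes a b :: real
  assumes "a > 0" and "b > 0" and "1/2 \<le> a * b" and "a * b \<le> 1"
  shows "WH_frame_bounds (\<lambda>t. complex_of_real (sqrt b) * beta0 a b t) a b 1 2
    \<and> normalized_tight_WH_frame (\<lambda>t. complex_of_real (sqrt b) * gamma0 a b t) a b
    \<and> (\<forall>f\<in>L2. AE x in lborel. f x = bracket_op a b (gamma0 a b) f x)
    \<and> (\<forall>k::int. AE x in lborel.
          bracket_op a b (psi0 a b) (transl (of_int k * a) (beta0 a b)) x
          = transl (of_int k * a) (gamma0 a b) x)
    \<and> (\<forall>f\<in>L2. AE x in lborel.
          bracket_op a b (psi0 a b) (bracket_op a b (beta0 a b) (bracket_op a b (psi0 a b) f)) x = f x)
    \<and> is_inv_sqrt (bracket_op a b (beta0 a b)) (bracket_op a b (psi0 a b))"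
proof -
  have a: "a > 0" and b: "b > 0" using assms by auto
  have ab1: "a \<le> 1/b" using assms b by (simp add: field_simps)
  have ab2: "1/b \<le> 2 * a" using assms b by (simp add: field_simps)
  interpret P: params a b using a b ab1 ab2 by unfold_locales
  define cg where "cg = 1 / sqrt (2::real)"
  define cp where "cp = 1 / sqrt (2 * sqrt (2::real))"
  have g_eq: "gamma0 a b = (\<lambda>x. complex_of_real (prof a b cg x))" unfolding cg_def by (rule gamma0_prof)
  have p_eq: "psi0 a b = (\<lambda>x. complex_of_real (prof a b cp x))" unfolding cp_def by (rule psi0_prof)
  interpret WB: window a b "beta0 a b" 1 by (rule P.window_beta)
  interpret WG: window a b "gamma0 a b" "2 * \<bar>cg\<bar> + 1" unfolding g_eq by (rule P.window_prof)
  interpret WP: window a b "psi0 a b" "2 * \<bar>cp\<bar> + 1" unfolding p_eq by (rule P.window_prof)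
  have cg2: "2 * cg\<^sup>2 = 1" unfolding cg_def by (rule P.c_gamma)
  have cp2: "2 * cp\<^sup>2 = cg" unfolding cp_def cg_def by (rule P.c_psi)
  have cg_pos: "0 < cg" "cg \<le> 1" unfolding cg_def by auto
  have WBv: "Wt a (beta0 a b) t = (if r < 1/b - a then 2 else 1)"
    and WGv: "Wt a (gamma0 a b) t = 1"
    and WPv: "Wt a (psi0 a b) t = (if r < 1/b - a then cg else 1)"
    if "t = of_int k * a + r" "0 \<le> r" "r < a" for t k r
    using P.Wt_beta[OF that(2,3), of k] P.Wt_prof[OF that(2,3), of cg k] P.Wt_prof[OF that(2,3), of cp k]
      that(1) cg2 cp2 unfolding g_eq p_eq by auto
  have WB12: "1 \<le> Wt a (beta0 a b) t \<and> Wt a (beta0 a b) t \<le> 2" for t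
  proof -
    obtain k r where "t = of_int k * a + r" "0 \<le> r" "r < a" by (rule P.decomp)
    then show ?thesis using WBv by auto
  qed
  have WG1: "Wt a (gamma0 a b) t = 1" for t
  proof -
    obtain k r where "t = of_int k * a + r" "0 \<le> r" "r < a" by (rule P.decomp)
    then show ?thesis using WGv by auto
  qed
  have WPB: "(Wt a (psi0 a b) t)\<^sup>2 * Wt a (beta0 a b) t = 1" for t
  proof -
    obtain k r where "t = of_int k * a + r" "0 \<le> r" "r < a" by (rule P.decomp)
    then show ?thesis using WBv WPv cg2 by auto
  qed
  have WP01: "0 \<le> Wt a (psi0 a b) t \<and> Wt a (psi0 a b) t \<le> 1" for t
  proof -
    obtain k r where "t = of_int k * a + r" "0 \<le> r" "r < a" by (rule P.decomp)
    then show ?thesis using WPv cg_pos by auto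
  qed
  have part1: "WH_frame_bounds (\<lambda>t. complex_of_real (sqrt b) * beta0 a b t) a b 1 2"
    by (rule WB.WH_from_window) (use WB12 in auto)
  have part2: "normalized_tight_WH_frame (\<lambda>t. complex_of_real (sqrt b) * gamma0 a b t) a b"
    unfolding normalized_tight_WH_frame_def by (rule WG.WH_from_window) (use WG1 in auto)
  have part3: "\<forall>f\<in>L2. AE x in lborel. f x = bracket_op a b (gamma0 a b) f x"
    by (auto simp: WG.bracket_eq WG1)
  have part4: "\<forall>k::int. AE x in lborel.
          bracket_op a b (psi0 a b) (transl (of_int k * a) (beta0 a b)) x
          = transl (of_int k * a) (gamma0 a b) x"
  proof (intro allI AE_I2)
    fix k :: int and x :: real
    define r where "r = x - of_int k * a"
    have lhs: "bracket_op a b (psi0 a b) (transl (of_int k * a) (beta0 a b)) x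
        = beta0 a b r * complex_of_real (Wt a (psi0 a b) x)"
      unfolding WP.bracket_eq by (simp add: transl_def r_def)
    have rhs: "transl (of_int k * a) (gamma0 a b) x = complex_of_real (prof a b cg r)"
      unfolding g_eq by (simp add: transl_def r_def)
    consider "r < 0 \<or> 1/b \<le> r" | "0 \<le> r" "r < a" | "a \<le> r" "r < 1/b" by linarith
    then show "bracket_op a b (psi0 a b) (transl (of_int k * a) (beta0 a b)) x = transl (of_int k * a) (gamma0 a b) x"
    proof cases
      case 1
      have "prof a b cg r = 0"
      proof (rule ccontr)
        assume "prof a b cg r \<noteq> 0"
        from P.prof_supp[OF this] 1 show False by linarith
      qed
      then show ?thesis unfolding lhs rhs using 1 by (auto simp: beta0_eq)
    next
      case 2
      have x: "x = of_int k * a + r" by (simp add: r_def)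
      have "r < 1/b" using 2 ab1 by simp
      then show ?thesis unfolding lhs rhs WPv[OF x 2] P.prof_at(1)[OF 2] using 2 by (simp add: beta0_eq)
    next
      case 3
      have x: "x = of_int (k + 1) * a + (r - a)" by (simp add: r_def algebra_simps)
      have r3: "0 \<le> r - a" "r - a < a" "r - a < 1/b - a" using 3 P.delta by auto
      have "prof a b cg (r - a + a) = cg" using P.prof_at(2)[OF r3(1,2), of cg] r3(3) by simp
      then show ?thesis unfolding lhs rhs WPv[OF x r3(1,2)] using 3 r3 a by (simp add: beta0_eq)
    qed
  qed
  have part5: "\<forall>f\<in>L2. AE x in lborel.
          bracket_op a b (psi0 a b) (bracket_op a b (beta0 a b) (bracket_op a b (psi0 a b) f)) x = f x"
  proof (intro ballI AE_I2)
    fix f and x :: real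
    have "bracket_op a b (psi0 a b) (bracket_op a b (beta0 a b) (bracket_op a b (psi0 a b) f)) x
        = f x * complex_of_real ((Wt a (psi0 a b) x)\<^sup>2 * Wt a (beta0 a b) x)"
      unfolding WP.bracket_eq WB.bracket_eq by (simp add: power2_eq_square mult_ac)
    then show "bracket_op a b (psi0 a b) (bracket_op a b (beta0 a b) (bracket_op a b (psi0 a b) f)) x = f x"
      using WPB by simp
  qed
  have part6: "is_inv_sqrt (bracket_op a b (beta0 a b)) (bracket_op a b (psi0 a b))"
    unfolding is_inv_sqrt_def
  proof (intro conjI ballI exI)
    fix f assume f: "f \<in> L2"
    show "bracket_op a b (beta0 a b) f \<in> L2" using f by (rule WB.bracket_L2)
    show "bracket_op a b (psi0 a b) f \<in> L2" using f by (rule WP.bracket_L2)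
    have RL: "bracket_op a b (psi0 a b) f \<in> L2" using f by (rule WP.bracket_L2)
    have fm[measurable]: "f \<in> borel_measurable borel" using L2_meas[OF f] by simp
    show "l2_normsq (bracket_op a b (psi0 a b) f) \<le> 1 * l2_normsq f"
      unfolding l2_normsq_def
    proof (simp, rule integral_mono)
      show "integrable lborel (\<lambda>x. (cmod (bracket_op a b (psi0 a b) f x))\<^sup>2)" using L2_int[OF RL] .
      show "integrable lborel (\<lambda>x. (cmod (f x))\<^sup>2)" using L2_int[OF f] .
      fix t
      have "cmod (bracket_op a b (psi0 a b) f t) \<le> cmod (f t)"
        unfolding WP.bracket_eq using WP01[of t]
        by (simp add: norm_mult mult_left_le)
      then show "(cmod (bracket_op a b (psi0 a b) f t))\<^sup>2 \<le> (cmod (f t))\<^sup>2"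
        by (intro power_mono) auto
    qed
    have ip: "l2_inner (bracket_op a b (psi0 a b) f) f = complex_of_real (LINT t|lborel. Wt a (psi0 a b) t * (cmod (f t))\<^sup>2)"
    proof -
      have "l2_inner (bracket_op a b (psi0 a b) f) f = (LINT t|lborel. complex_of_real (Wt a (psi0 a b) t * (cmod (f t))\<^sup>2))"
        unfolding l2_inner_def WP.bracket_eq
        by (intro Bochner_Integration.integral_cong refl) (simp add: complex_norm_square[symmetric] mult_ac)
      then show ?thesis by (simp only: integral_complex_of_real)
    qed
    show "Im (l2_inner (bracket_op a b (psi0 a b) f) f) = 0" unfolding ip by simp
    show "0 \<le> Re (l2_inner (bracket_op a b (psi0 a b) f) f)" unfolding ip using WP01
      by (simp add: integral_nonneg)
    show "AE x in lborel. bracket_op a b (psi0 a b) (bracket_op a b (psi0 a b) (bracket_op a b (beta0 a b) f)) x = f x"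
    proof (rule AE_I2)
      fix x
      have "bracket_op a b (psi0 a b) (bracket_op a b (psi0 a b) (bracket_op a b (beta0 a b) f)) x
          = f x * complex_of_real ((Wt a (psi0 a b) x)\<^sup>2 * Wt a (beta0 a b) x)"
        unfolding WP.bracket_eq WB.bracket_eq by (simp add: power2_eq_square mult_ac)
      then show "bracket_op a b (psi0 a b) (bracket_op a b (psi0 a b) (bracket_op a b (beta0 a b) f)) x = f x"
        using WPB by simp
    qed
    show "AE x in lborel. bracket_op a b (beta0 a b) (bracket_op a b (psi0 a b) (bracket_op a b (psi0 a b) f)) x = f x"
    proof (rule AE_I2)
      fix x
      have "bracket_op a b (beta0 a b) (bracket_op a b (psi0 a b) (bracket_op a b (psi0 a b) f)) x
          = f x * complex_of_real ((Wt a (psi0 a b) x)\<^sup>2 * Wt a (beta0 a b) x)"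
        unfolding WP.bracket_eq WB.bracket_eq by (simp add: power2_eq_square mult_ac)
      then show "bracket_op a b (beta0 a b) (bracket_op a b (psi0 a b) (bracket_op a b (psi0 a b) f)) x = f x"
        using WPB by simp
    qed
  qed
  show ?thesis using part1 part2 part3 part4 part5 part6 by blast
qed

end
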